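(* Assume Assumption A-0 holds, let $T\ge1$, let $\psi_T$ be a bounded measurable function on $\mathbb{R}^d$, and let $(b_N)$ be positive reals with $b_N\to\infty$, $\sqrt N/b_N\to\infty$. Define $$R_N^T=\frac{\sqrt N}{b_N}\Big(\frac{\sum_{i=1}^NL_T\psi_T(x_{i,T-1})}{\sum_{i=1}^NL_T\mathbb{1}(x_{i,T-1})}-m_T(\psi_T)\Big),\qquad \tilde R_N^T=\frac{1}{b_N\sqrt N\,\kappa_T}\Big(\sum_{i=1}^NL_T\psi_T(x_{i,T-1})-m_T(\psi_T)\sum_{i=1}^NL_T\mathbb{1}(x_{i,T-1})\Big).$$ Then for every $\delta>0$, $$\limsup_{N\to\infty}\frac1{b_N^2}\log\mathbb{P}_T(|R_N^T-\tilde R_N^T|>\delta)=-\infty.$$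
   Context: Hidden Markov model: Markov chain $(X_t)$ on $\mathbb{R}^d$ with initial density $a_0$ and transition densities $a_t(x,x')$ w.r.t. a measure $\mu$; observation densities $b_t(x,y)$ w.r.t. a measure $\nu$; observations $y_1,\dots,y_T$ fixed, $\mathbb{P}_T=\mathbb{P}(\cdot\mid Y_1=y_1,\dots,Y_T=y_T)$. Filter: $f_{0|0}=a_0$, $f_{t|t}(x)\propto b_t(x,y_t)\int f_{t-1|t-1}(u)a_t(u,x)\mu(du)$ (normalized). Particle filter: $(x_{i,0})_{i\le N}$ i.i.d. with law $a_0d\mu$; given generations up to $t-1$, $(x_{i,t})_{i\le N}$ i.i.d. with law $f^N_{t|t}d\mu$, $f^N_{t|t}(x)\propto b_t(x,y_t)\frac1N\sum_ia_t(x_{i,t-1},x)$ (normalized). Notation: $m_t(\psi)=\int\psi f_{t|t}d\mu$; $L_t\psi(x)=\int a_t(x,u)b_t(u,y_t)\psi(u)\mu(du)$; $\mathbb{1}\equiv1$. Assumption A-0: for every $t\ge1$, $\sup_xL_t\mathbb{1}(x)<\infty$ and $L_t\mathbb{1}(x)>0$ for all $x$; $\kappa_t:=\int L_t\mathbb{1}\,f_{t-1|t-1}d\mu>0$. *)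

theory Defs
  imports "HOL-Probability.Probability"
begin

text \<open>Hidden Markov model on a Euclidean space 'a (= R^d), reference measure mu on 'a,
  transition densities a t x x', observation densities b t x y, fixed observations y t.\<close>

definition Lop :: "'a measure \<Rightarrow> (nat \<Rightarrow> 'a \<Rightarrow> 'a \<Rightarrow> real) \<Rightarrow> (nat \<Rightarrow> 'a \<Rightarrow> 'b \<Rightarrow> real)
    \<Rightarrow> (nat \<Rightarrow> 'b) \<Rightarrow> nat \<Rightarrow> ('a \<Rightarrow> real) \<Rightarrow> 'a \<Rightarrow> real" where
  "Lop \<mu> a b y t \<psi> x = (\<integral>u. a t x u * b t u (y t) * \<psi> u \<partial>\<mu>)"

primrec filt :: "'a measure \<Rightarrow> ('a \<Rightarrow> real) \<Rightarrow> (nat \<Rightarrow> 'a \<Rightarrow> 'a \<Rightarrow> real) \<Rightarrow> (nat \<Rightarrow> 'a \<Rightarrow> 'b \<Rightarrow> real)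
    \<Rightarrow> (nat \<Rightarrow> 'b) \<Rightarrow> nat \<Rightarrow> 'a \<Rightarrow> real" where
  "filt \<mu> a0 a b y 0 = a0"
| "filt \<mu> a0 a b y (Suc t) =
     (\<lambda>x. b (Suc t) x (y (Suc t)) * (\<integral>u. filt \<mu> a0 a b y t u * a (Suc t) u x \<partial>\<mu>)
        / (\<integral>x'. b (Suc t) x' (y (Suc t)) * (\<integral>u. filt \<mu> a0 a b y t u * a (Suc t) u x' \<partial>\<mu>) \<partial>\<mu>))"

definition mfilt :: "'a measure \<Rightarrow> ('a \<Rightarrow> real) \<Rightarrow> (nat \<Rightarrow> 'a \<Rightarrow> 'a \<Rightarrow> real) \<Rightarrow> (nat \<Rightarrow> 'a \<Rightarrow> 'b \<Rightarrow> real)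
    \<Rightarrow> (nat \<Rightarrow> 'b) \<Rightarrow> nat \<Rightarrow> ('a \<Rightarrow> real) \<Rightarrow> real" where
  "mfilt \<mu> a0 a b y t \<psi> = (\<integral>x. \<psi> x * filt \<mu> a0 a b y t x \<partial>\<mu>)"

definition kappa :: "'a measure \<Rightarrow> ('a \<Rightarrow> real) \<Rightarrow> (nat \<Rightarrow> 'a \<Rightarrow> 'a \<Rightarrow> real) \<Rightarrow> (nat \<Rightarrow> 'a \<Rightarrow> 'b \<Rightarrow> real)
    \<Rightarrow> (nat \<Rightarrow> 'b) \<Rightarrow> nat \<Rightarrow> real" where
  "kappa \<mu> a0 a b y t = (\<integral>x. Lop \<mu> a b y t (\<lambda>_. 1) x * filt \<mu> a0 a b y (t - 1) x \<partial>\<mu>)"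

definition pf_dens :: "'a measure \<Rightarrow> (nat \<Rightarrow> 'a \<Rightarrow> 'a \<Rightarrow> real) \<Rightarrow> (nat \<Rightarrow> 'a \<Rightarrow> 'b \<Rightarrow> real)
    \<Rightarrow> (nat \<Rightarrow> 'b) \<Rightarrow> nat \<Rightarrow> nat \<Rightarrow> (nat \<Rightarrow> 'a) \<Rightarrow> 'a \<Rightarrow> real" where
  "pf_dens \<mu> a b y N t xs x =
     b t x (y t) * ((\<Sum>i<N. a t (xs i) x) / real N)
     / (\<integral>x'. b t x' (y t) * ((\<Sum>i<N. a t (xs i) x') / real N) \<partial>\<mu>)"

text \<open>Law of the generation t of the particle system (x_{i,t})_{i<N}: generation 0 is i.i.d. a0 dmu,
  generation t is, conditionally on generation t-1, i.i.d. with law f^N_{t|t} dmu.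
  (Only the marginal law of one generation is needed in the statement.)\<close>
primrec pf_law :: "'a measure \<Rightarrow> ('a \<Rightarrow> real) \<Rightarrow> (nat \<Rightarrow> 'a \<Rightarrow> 'a \<Rightarrow> real) \<Rightarrow> (nat \<Rightarrow> 'a \<Rightarrow> 'b \<Rightarrow> real)
    \<Rightarrow> (nat \<Rightarrow> 'b) \<Rightarrow> nat \<Rightarrow> nat \<Rightarrow> (nat \<Rightarrow> 'a) measure" where
  "pf_law \<mu> a0 a b y N 0 = PiM {..<N} (\<lambda>_. density \<mu> (\<lambda>x. ennreal (a0 x)))"
| "pf_law \<mu> a0 a b y N (Suc t) =
     pf_law \<mu> a0 a b y N t \<bind>
       (\<lambda>xs. PiM {..<N} (\<lambda>_. density \<mu> (\<lambda>x. ennreal (pf_dens \<mu> a b y N (Suc t) xs x))))"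

definition eln :: "real \<Rightarrow> ereal" where
  "eln p = (if p \<le> 0 then -\<infinity> else ereal (ln p))"

end

theory Submission
  imports Defs
begin


locale hmm =
  fixes \<mu> :: "'a::euclidean_space measure" and \<nu> :: "'b measure"
    and a0 :: "'a \<Rightarrow> real" and a :: "nat \<Rightarrow> 'a \<Rightarrow> 'a \<Rightarrow> real"
    and b :: "nat \<Rightarrow> 'a \<Rightarrow> 'b \<Rightarrow> real" and y :: "nat \<Rightarrow> 'b"
  assumes mu_sets: "sets \<mu> = sets borel" and mu_sf: "sigma_finite_measure \<mu>"
    and y_mem: "\<And>t. y t \<in> space \<nu>"
    and a0_meas: "a0 \<in> borel_measurable \<mu>" and a0_nn: "\<And>x. a0 x \<ge> 0"
    and a0_dens: "(\<integral>\<^sup>+x. ennreal (a0 x) \<partial>\<mu>) = 1"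
    and a_meas: "\<And>t. (\<lambda>(x, x'). a t x x') \<in> borel_measurable (\<mu> \<Otimes>\<^sub>M \<mu>)"
    and a_nn: "\<And>t x x'. a t x x' \<ge> 0"
    and b_meas: "\<And>t. (\<lambda>(x, v). b t x v) \<in> borel_measurable (\<mu> \<Otimes>\<^sub>M \<nu>)"
    and b_nn: "\<And>t x v. b t x v \<ge> 0"
    and A0_bdd: "\<And>t. t \<ge> 1 \<Longrightarrow> bdd_above (range (Lop \<mu> a b y t (\<lambda>_. 1)))"
    and A0_pos: "\<And>t x. t \<ge> 1 \<Longrightarrow> Lop \<mu> a b y t (\<lambda>_. 1) x > 0"
    and A0_kappa: "\<And>t. t \<ge> 1 \<Longrightarrow> kappa \<mu> a0 a b y t > 0"
begin

interpretation mu: sigma_finite_measure \<mu> by (rule mu_sf)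

lemma space_mu[simp]: "space \<mu> = UNIV"
  using sets_eq_imp_space_eq[OF mu_sets] by simp

lemma meas_mu_iff: "f \<in> borel_measurable \<mu> \<longleftrightarrow> f \<in> borel_measurable borel"
  using measurable_cong_sets[OF mu_sets refl] by blast

lemma meas_to_mu: "g \<in> M \<rightarrow>\<^sub>M \<mu> \<longleftrightarrow> g \<in> M \<rightarrow>\<^sub>M borel"
  using measurable_cong_sets[OF refl mu_sets] by blast

lemma B_meas_comp[measurable]:
  assumes "g \<in> M \<rightarrow>\<^sub>M \<mu>"
  shows "(\<lambda>z. b t (g z) (y t)) \<in> borel_measurable M"
proof -
  have "(\<lambda>z. (g z, y t)) \<in> M \<rightarrow>\<^sub>M \<mu> \<Otimes>\<^sub>M \<nu>"
    using assms y_mem by measurable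
  from measurable_compose[OF this b_meas[of t]] show ?thesis by simp
qed

lemma a_meas_comp[measurable]:
  assumes "g \<in> M \<rightarrow>\<^sub>M \<mu>" "h \<in> M \<rightarrow>\<^sub>M \<mu>"
  shows "(\<lambda>z. a t (g z) (h z)) \<in> borel_measurable M"
proof -
  have "(\<lambda>z. (g z, h z)) \<in> M \<rightarrow>\<^sub>M \<mu> \<Otimes>\<^sub>M \<mu>"
    using assms by measurable
  from measurable_compose[OF this a_meas[of t]] show ?thesis by simp
qed

lemma intL1: assumes "t \<ge> 1" shows "integrable \<mu> (\<lambda>u. a t x u * b t u (y t))"
proof (rule ccontr)
  assume "\<not> ?thesis"
  hence "Lop \<mu> a b y t (\<lambda>_. 1) x = 0"
    unfolding Lop_def by (simp add: not_integrable_integral_eq)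
  with A0_pos[OF assms, of x] show False by simp
qed

lemma intLphi:
  assumes "t \<ge> 1" "\<phi> \<in> borel_measurable \<mu>" "\<And>x. \<bar>\<phi> x\<bar> \<le> M"
  shows "integrable \<mu> (\<lambda>u. a t x u * b t u (y t) * \<phi> u)"
proof (rule Bochner_Integration.integrable_bound[OF integrable_mult_right[OF intL1[OF assms(1)], of M]])
  show "(\<lambda>u. a t x u * b t u (y t) * \<phi> u) \<in> borel_measurable \<mu>"
    using assms(2) by measurable
  show "AE u in \<mu>. norm (a t x u * b t u (y t) * \<phi> u) \<le> norm (M * (a t x u * b t u (y t)))"
  proof (intro AE_I2)
    fix u
    have "\<bar>\<phi> u\<bar> \<le> \<bar>M\<bar>" using assms(3)[of u] by simp
    hence "\<bar>a t x u * b t u (y t)\<bar> * \<bar>\<phi> u\<bar> \<le> \<bar>a t x u * b t u (y t)\<bar> * \<bar>M\<bar>"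
      by (intro mult_left_mono) auto
    thus "norm (a t x u * b t u (y t) * \<phi> u) \<le> norm (M * (a t x u * b t u (y t)))"
      by (simp add: abs_mult mult_ac)
  qed
qed

lemma L1_eq: "Lop \<mu> a b y t (\<lambda>_. 1) x = (\<integral>u. a t x u * b t u (y t) \<partial>\<mu>)"
  unfolding Lop_def by simp

lemma L_bound:
  assumes "t \<ge> 1" "\<phi> \<in> borel_measurable \<mu>" "\<And>x. \<bar>\<phi> x\<bar> \<le> M"
  shows "\<bar>Lop \<mu> a b y t \<phi> x\<bar> \<le> M * Lop \<mu> a b y t (\<lambda>_. 1) x"
proof -
  have "\<bar>Lop \<mu> a b y t \<phi> x\<bar> \<le> (\<integral>u. M * (a t x u * b t u (y t)) \<partial>\<mu>)"
    unfolding Lop_def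
  proof (rule integral_abs_bound_integral)
    show "integrable \<mu> (\<lambda>u. a t x u * b t u (y t) * \<phi> u)" by (rule intLphi[OF assms])
    show "integrable \<mu> (\<lambda>u. M * (a t x u * b t u (y t)))" using intL1[OF assms(1)] by simp
    fix u
    have "\<bar>\<phi> u\<bar> \<le> M" by (rule assms(3))
    hence "(a t x u * b t u (y t)) * \<bar>\<phi> u\<bar> \<le> (a t x u * b t u (y t)) * M"
      by (intro mult_left_mono) (auto intro: mult_nonneg_nonneg a_nn b_nn)
    thus "\<bar>a t x u * b t u (y t) * \<phi> u\<bar> \<le> M * (a t x u * b t u (y t))"
      using a_nn b_nn by (simp add: abs_mult mult_ac)
  qed
  also have "\<dots> = M * Lop \<mu> a b y t (\<lambda>_. 1) x" by (simp add: L1_eq)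
  finally show ?thesis .
qed

lemma L_meas[measurable]:
  assumes "\<phi> \<in> borel_measurable \<mu>"
  shows "Lop \<mu> a b y t \<phi> \<in> borel_measurable \<mu>"
proof -
  have "(\<lambda>(x, u). a t x u * b t u (y t) * \<phi> u) \<in> borel_measurable (\<mu> \<Otimes>\<^sub>M \<mu>)"
    using assms by measurable
  from mu.borel_measurable_lebesgue_integral[OF this] show ?thesis
    unfolding Lop_def[abs_def] by simp
qed

lemma L_meas_comp[measurable]:
  assumes "\<phi> \<in> borel_measurable \<mu>" "g \<in> M \<rightarrow>\<^sub>M \<mu>"
  shows "(\<lambda>z. Lop \<mu> a b y t \<phi> (g z)) \<in> borel_measurable M"
  using measurable_compose[OF assms(2) L_meas[OF assms(1)]] by simp

lemma L1_bdd: assumes "t \<ge> 1" obtains BL where "BL > 0" "\<And>x. Lop \<mu> a b y t (\<lambda>_. 1) x \<le> BL"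
proof -
  from A0_bdd[OF assms] obtain BL where "\<And>x. Lop \<mu> a b y t (\<lambda>_. 1) x \<le> BL"
    by (auto simp: bdd_above_def)
  moreover have "BL > 0" using A0_pos[OF assms, of 0] calculation[of 0] by simp
  ultimately show ?thesis using that by blast
qed

lemma fub:
  assumes t: "t \<ge> 1" and f: "f \<in> borel_measurable \<mu>" "\<And>u. f u \<ge> 0" "integrable \<mu> f"
    and phi: "\<phi> \<in> borel_measurable \<mu>" "\<And>x. \<bar>\<phi> x\<bar> \<le> M"
  shows "integrable \<mu> (\<lambda>x. \<phi> x * (b t x (y t) * (\<integral>u. f u * a t u x \<partial>\<mu>)))"
    and "(\<integral>x. \<phi> x * (b t x (y t) * (\<integral>u. f u * a t u x \<partial>\<mu>)) \<partial>\<mu>) = (\<integral>u. f u * Lop \<mu> a b y t \<phi> u \<partial>\<mu>)"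
proof -
  interpret P: pair_sigma_finite \<mu> \<mu> by (intro pair_sigma_finite.intro mu_sf)
  obtain BL where BL: "BL > 0" "\<And>x. Lop \<mu> a b y t (\<lambda>_. 1) x \<le> BL" using L1_bdd[OF t] by blast
  have M0: "M \<ge> 0" using phi(2)[of 0] by simp
  define F where "F = (\<lambda>u x. f u * (a t u x * b t x (y t) * \<phi> x))"
  have Fm: "case_prod F \<in> borel_measurable (\<mu> \<Otimes>\<^sub>M \<mu>)" unfolding F_def using f phi by measurable
  have absphi: "(\<lambda>x. \<bar>\<phi> x\<bar>) \<in> borel_measurable \<mu>" "\<And>x. \<bar>\<bar>\<phi> x\<bar>\<bar> \<le> M" using phi by auto
  have normF: "(\<integral>x. norm (case_prod F (u, x)) \<partial>\<mu>) = f u * Lop \<mu> a b y t (\<lambda>x. \<bar>\<phi> x\<bar>) u" for u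
  proof -
    have "(\<lambda>x. norm (case_prod F (u, x))) = (\<lambda>x. f u * (a t u x * b t x (y t) * \<bar>\<phi> x\<bar>))"
      unfolding F_def using f(2) a_nn b_nn by (auto simp: abs_mult)
    thus ?thesis unfolding Lop_def by simp
  qed
  have intF: "integrable (\<mu> \<Otimes>\<^sub>M \<mu>) (case_prod F)"
  proof (rule P.Fubini_integrable[OF Fm])
    show "integrable \<mu> (\<lambda>u. \<integral>x. norm (case_prod F (u, x)) \<partial>\<mu>)"
      unfolding normF
    proof (rule Bochner_Integration.integrable_bound[OF integrable_mult_left[OF f(3), of "M * BL"]])
      show "(\<lambda>u. f u * Lop \<mu> a b y t (\<lambda>x. \<bar>\<phi> x\<bar>) u) \<in> borel_measurable \<mu>"
        using f absphi by measurable
      show "AE u in \<mu>. norm (f u * Lop \<mu> a b y t (\<lambda>x. \<bar>\<phi> x\<bar>) u) \<le> norm (f u * (M * BL))"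
      proof (intro AE_I2)
        fix u
        have "\<bar>Lop \<mu> a b y t (\<lambda>x. \<bar>\<phi> x\<bar>) u\<bar> \<le> M * Lop \<mu> a b y t (\<lambda>_. 1) u"
          by (rule L_bound[OF t absphi])
        also have "\<dots> \<le> M * BL" using BL(2)[of u] M0 by (intro mult_left_mono) auto
        finally have "\<bar>f u\<bar> * \<bar>Lop \<mu> a b y t (\<lambda>x. \<bar>\<phi> x\<bar>) u\<bar> \<le> \<bar>f u\<bar> * (M * BL)"
          by (intro mult_left_mono) auto
        thus "norm (f u * Lop \<mu> a b y t (\<lambda>x. \<bar>\<phi> x\<bar>) u) \<le> norm (f u * (M * BL))"
          using M0 BL f(2)[of u] by (simp add: abs_mult)
      qed
    qed
    show "AE u in \<mu>. integrable \<mu> (\<lambda>x. case_prod F (u, x))"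
      unfolding F_def using intLphi[OF t phi] by simp
  qed
  have eqx: "(\<integral>u. F u x \<partial>\<mu>) = \<phi> x * (b t x (y t) * (\<integral>u. f u * a t u x \<partial>\<mu>))" for x
  proof -
    have "(\<lambda>u. F u x) = (\<lambda>u. (\<phi> x * b t x (y t)) * (f u * a t u x))"
      unfolding F_def by (auto simp: mult_ac)
    thus ?thesis by simp
  qed
  have equ: "(\<integral>x. F u x \<partial>\<mu>) = f u * Lop \<mu> a b y t \<phi> u" for u
    unfolding F_def Lop_def by simp
  show "integrable \<mu> (\<lambda>x. \<phi> x * (b t x (y t) * (\<integral>u. f u * a t u x \<partial>\<mu>)))"
    using P.integrable_snd[OF intF] unfolding eqx .
  show "(\<integral>x. \<phi> x * (b t x (y t) * (\<integral>u. f u * a t u x \<partial>\<mu>)) \<partial>\<mu>) = (\<integral>u. f u * Lop \<mu> a b y t \<phi> u \<partial>\<mu>)"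
    using P.Fubini_integral[OF intF] unfolding eqx equ .
qed

lemma kappa_eq: "kappa \<mu> a0 a b y t = (\<integral>u. filt \<mu> a0 a b y (t - 1) u * Lop \<mu> a b y t (\<lambda>_. 1) u \<partial>\<mu>)"
  unfolding kappa_def by (simp add: mult.commute)

lemma filt_good:
  "filt \<mu> a0 a b y t \<in> borel_measurable \<mu> \<and> (\<forall>x. filt \<mu> a0 a b y t x \<ge> 0) \<and> integrable \<mu> (filt \<mu> a0 a b y t)"
proof (induction t)
  case 0
  have "integrable \<mu> a0"
    by (rule integrableI_nn_integral_finite[OF a0_meas]) (auto simp: a0_nn a0_dens)
  thus ?case using a0_meas a0_nn by simp
next
  case (Suc t)
  define f where "f = filt \<mu> a0 a b y t"
  have f: "f \<in> borel_measurable \<mu>" "\<And>u. f u \<ge> 0" "integrable \<mu> f" using Suc unfolding f_def by auto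
  have t: "Suc t \<ge> 1" by simp
  have one: "(\<lambda>_. 1::real) \<in> borel_measurable \<mu>" "\<And>x::'a. \<bar>1::real\<bar> \<le> 1" by auto
  define Z where "Z = (\<integral>x'. b (Suc t) x' (y (Suc t)) * (\<integral>u. f u * a (Suc t) u x' \<partial>\<mu>) \<partial>\<mu>)"
  have eq: "filt \<mu> a0 a b y (Suc t) = (\<lambda>x. b (Suc t) x (y (Suc t)) * (\<integral>u. f u * a (Suc t) u x \<partial>\<mu>) / Z)"
    unfolding f_def Z_def by simp
  have m1: "(\<lambda>x. \<integral>u. f u * a (Suc t) u x \<partial>\<mu>) \<in> borel_measurable \<mu>"
  proof -
    have "(\<lambda>(x, u). f u * a (Suc t) u x) \<in> borel_measurable (\<mu> \<Otimes>\<^sub>M \<mu>)" using f by measurable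
    from mu.borel_measurable_lebesgue_integral[OF this] show ?thesis by simp
  qed
  have "filt \<mu> a0 a b y (Suc t) \<in> borel_measurable \<mu>" unfolding eq using m1 by measurable
  moreover have "\<forall>x. filt \<mu> a0 a b y (Suc t) x \<ge> 0"
  proof
    fix x
    have "(\<integral>u. f u * a (Suc t) u x \<partial>\<mu>) \<ge> 0" using f(2) a_nn by (intro integral_nonneg_AE) auto
    moreover have "Z \<ge> 0" unfolding Z_def using f(2) a_nn b_nn
      by (intro integral_nonneg_AE AE_I2 mult_nonneg_nonneg integral_nonneg_AE) auto
    ultimately show "filt \<mu> a0 a b y (Suc t) x \<ge> 0" unfolding eq using b_nn by simp
  qed
  moreover have "integrable \<mu> (filt \<mu> a0 a b y (Suc t))"
    using fub(1)[OF t f one] unfolding eq by simp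
  ultimately show ?case by blast
qed

lemma filt_meas[measurable]: "filt \<mu> a0 a b y t \<in> borel_measurable \<mu>" using filt_good by blast
lemma filt_nn: "filt \<mu> a0 a b y t x \<ge> 0" using filt_good by blast
lemma filt_int: "integrable \<mu> (filt \<mu> a0 a b y t)" using filt_good by blast

lemma mfilt_step:
  assumes t: "t \<ge> 1" and phi: "\<phi> \<in> borel_measurable \<mu>" "\<And>x. \<bar>\<phi> x\<bar> \<le> M"
  shows "mfilt \<mu> a0 a b y t \<phi> = (\<integral>u. filt \<mu> a0 a b y (t - 1) u * Lop \<mu> a b y t \<phi> u \<partial>\<mu>) / kappa \<mu> a0 a b y t"
proof -
  obtain s where s: "t = Suc s" using t by (cases t) auto
  define f where "f = filt \<mu> a0 a b y s"
  have f: "f \<in> borel_measurable \<mu>" "\<And>u. f u \<ge> 0" "integrable \<mu> f" unfolding f_def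
    by (auto simp: filt_nn filt_int)
  have one: "(\<lambda>_. 1::real) \<in> borel_measurable \<mu>" "\<And>x::'a. \<bar>1::real\<bar> \<le> 1" by auto
  define Z where "Z = (\<integral>x'. b t x' (y t) * (\<integral>u. f u * a t u x' \<partial>\<mu>) \<partial>\<mu>)"
  have eq: "filt \<mu> a0 a b y t = (\<lambda>x. b t x (y t) * (\<integral>u. f u * a t u x \<partial>\<mu>) / Z)"
    unfolding f_def Z_def s by simp
  have Z: "Z = kappa \<mu> a0 a b y t"
    using fub(2)[OF t f one] unfolding Z_def kappa_eq s f_def by simp
  have "mfilt \<mu> a0 a b y t \<phi> = (\<integral>x. \<phi> x * (b t x (y t) * (\<integral>u. f u * a t u x \<partial>\<mu>)) / Z \<partial>\<mu>)"
    unfolding mfilt_def eq by (simp add: mult_ac)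
  also have "\<dots> = (\<integral>x. \<phi> x * (b t x (y t) * (\<integral>u. f u * a t u x \<partial>\<mu>)) \<partial>\<mu>) / Z" by simp
  also have "\<dots> = (\<integral>u. f u * Lop \<mu> a b y t \<phi> u \<partial>\<mu>) / Z" using fub(2)[OF t f phi] by simp
  finally show ?thesis unfolding Z f_def s by simp
qed

end



context hmm
begin

interpretation mu: sigma_finite_measure \<mu> by (rule mu_sf)

lemma Zpf:
  assumes t: "t \<ge> 1" and N: "N > 0"
  shows "(\<integral>x'. b t x' (y t) * ((\<Sum>i<N. a t (xs i) x') / real N) \<partial>\<mu>)
        = (\<Sum>i<N. Lop \<mu> a b y t (\<lambda>_. 1) (xs i)) / real N"
proof -
  have "(\<lambda>x'. b t x' (y t) * ((\<Sum>i<N. a t (xs i) x') / real N))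
      = (\<lambda>x'. (1 / real N) * (\<Sum>i<N. a t (xs i) x' * b t x' (y t)))"
    by (rule ext) (simp add: sum_distrib_left sum_distrib_right sum_divide_distrib mult_ac)
  hence "(\<integral>x'. b t x' (y t) * ((\<Sum>i<N. a t (xs i) x') / real N) \<partial>\<mu>)
      = (1 / real N) * (\<Sum>i<N. \<integral>x'. a t (xs i) x' * b t x' (y t) \<partial>\<mu>)"
    using intL1[OF t] by (simp add: integral_sum)
  thus ?thesis by (simp add: L1_eq)
qed

lemma S1_pos: assumes t: "t \<ge> 1" and N: "(N::nat) > 0"
  shows "(\<Sum>i<N. Lop \<mu> a b y t (\<lambda>_. 1) (xs i)) > 0"
  using N by (rule_tac sum_pos) (auto simp: A0_pos[OF t])

lemma pf_dens_eq:
  assumes t: "t \<ge> 1" and N: "N > 0"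
  shows "pf_dens \<mu> a b y N t xs x
       = b t x (y t) * (\<Sum>i<N. a t (xs i) x) / (\<Sum>i<N. Lop \<mu> a b y t (\<lambda>_. 1) (xs i))"
  unfolding pf_dens_def Zpf[OF t N] using N by (simp add: field_simps)

lemma pf_dens_nn: "pf_dens \<mu> a b y N t xs x \<ge> 0"
proof -
  have "(\<integral>x'. b t x' (y t) * ((\<Sum>i<N. a t (xs i) x') / real N) \<partial>\<mu>) \<ge> 0"
    using a_nn b_nn by (intro integral_nonneg_AE AE_I2 mult_nonneg_nonneg divide_nonneg_nonneg sum_nonneg) auto
  thus ?thesis unfolding pf_dens_def using a_nn b_nn
    by (intro divide_nonneg_nonneg mult_nonneg_nonneg sum_nonneg) auto
qed

lemma pf_dens_meas:
  assumes t: "t \<ge> 1" and N: "N > 0"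
  shows "(\<lambda>(xs, x). pf_dens \<mu> a b y N t xs x) \<in> borel_measurable (PiM {..<N} (\<lambda>_. \<mu>) \<Otimes>\<^sub>M \<mu>)"
proof -
  have "(\<lambda>(xs, x). pf_dens \<mu> a b y N t xs x) =
     (\<lambda>(xs, x). b t x (y t) * (\<Sum>i<N. a t (xs i) x) / (\<Sum>i<N. Lop \<mu> a b y t (\<lambda>_. 1) (xs i)))"
    by (simp add: pf_dens_eq[OF t N])
  also have "\<dots> \<in> borel_measurable (PiM {..<N} (\<lambda>_. \<mu>) \<Otimes>\<^sub>M \<mu>)"
    by measurable
  finally show ?thesis .
qed

lemma pf_integral:
  assumes t: "t \<ge> 1" and N: "N > 0" and phi: "\<phi> \<in> borel_measurable \<mu>" "\<And>x. \<bar>\<phi> x\<bar> \<le> M"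
  shows "(\<integral>x. pf_dens \<mu> a b y N t xs x * \<phi> x \<partial>\<mu>)
       = (\<Sum>i<N. Lop \<mu> a b y t \<phi> (xs i)) / (\<Sum>i<N. Lop \<mu> a b y t (\<lambda>_. 1) (xs i))"
proof -
  define S where "S = (\<Sum>i<N. Lop \<mu> a b y t (\<lambda>_. 1) (xs i))"
  have "(\<lambda>x. pf_dens \<mu> a b y N t xs x * \<phi> x) = (\<lambda>x. (1 / S) * (\<Sum>i<N. a t (xs i) x * b t x (y t) * \<phi> x))"
    by (rule ext) (simp add: pf_dens_eq[OF t N] S_def sum_distrib_left sum_distrib_right sum_divide_distrib mult_ac)
  hence "(\<integral>x. pf_dens \<mu> a b y N t xs x * \<phi> x \<partial>\<mu>) = (1 / S) * (\<Sum>i<N. \<integral>x. a t (xs i) x * b t x (y t) * \<phi> x \<partial>\<mu>)"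
    using intLphi[OF t phi] by (simp add: integral_sum)
  thus ?thesis unfolding S_def Lop_def by simp
qed

lemma pf_prob:
  assumes t: "t \<ge> 1" and N: "N > 0"
  shows "prob_space (density \<mu> (\<lambda>x. ennreal (pf_dens \<mu> a b y N t xs x)))"
proof (rule prob_spaceI)
  have m: "pf_dens \<mu> a b y N t xs \<in> borel_measurable \<mu>"
    unfolding pf_dens_eq[OF t N, abs_def] by measurable
  have one: "(\<lambda>_. 1::real) \<in> borel_measurable \<mu>" "\<And>x::'a. \<bar>1::real\<bar> \<le> 1" by auto
  have i1: "(\<integral>x. pf_dens \<mu> a b y N t xs x \<partial>\<mu>) = 1"
    using pf_integral[OF t N one] S1_pos[OF t N, of xs] by simp
  have int: "integrable \<mu> (pf_dens \<mu> a b y N t xs)"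
  proof -
    have "(\<lambda>x. pf_dens \<mu> a b y N t xs x) = (\<lambda>x. (1 / (\<Sum>i<N. Lop \<mu> a b y t (\<lambda>_. 1) (xs i))) * (\<Sum>i<N. a t (xs i) x * b t x (y t)))"
      by (rule ext) (simp add: pf_dens_eq[OF t N] sum_distrib_left sum_distrib_right sum_divide_distrib mult_ac)
    moreover have "integrable \<mu> (\<lambda>x. (1 / (\<Sum>i<N. Lop \<mu> a b y t (\<lambda>_. 1) (xs i))) * (\<Sum>i<N. a t (xs i) x * b t x (y t)))"
      using intL1[OF t] by auto
    ultimately show ?thesis by simp
  qed
  show "emeasure (density \<mu> (\<lambda>x. ennreal (pf_dens \<mu> a b y N t xs x))) (space (density \<mu> (\<lambda>x. ennreal (pf_dens \<mu> a b y N t xs x)))) = 1"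
  proof -
    have "emeasure (density \<mu> (\<lambda>x. ennreal (pf_dens \<mu> a b y N t xs x))) UNIV = (\<integral>\<^sup>+x. ennreal (pf_dens \<mu> a b y N t xs x) * indicator UNIV x \<partial>\<mu>)"
      by (rule emeasure_density) (use m sets.top[of \<mu>] in auto)
    also have "\<dots> = (\<integral>\<^sup>+x. ennreal (pf_dens \<mu> a b y N t xs x) \<partial>\<mu>)" by simp
    also have "\<dots> = 1" by (simp add: nn_integral_eq_integral[OF int] pf_dens_nn i1)
    finally show ?thesis by simp
  qed
qed

end



lemma indep_coords:
  assumes Q: "prob_space Q" and fin: "finite I"
  shows "prob_space.indep_vars (PiM I (\<lambda>_. Q)) (\<lambda>_. Q) (\<lambda>i zs. zs i) I"
proof -
  interpret PS: prob_space "PiM I (\<lambda>_. Q)" by (rule prob_space_PiM) (use Q in auto)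
  show ?thesis
  proof (cases "I = {}")
    case True
    thus ?thesis by (subst prob_space.indep_vars_def[OF PS.prob_space_axioms], subst prob_space.indep_sets_def[OF PS.prob_space_axioms]) simp_all
  next
    case False
    show ?thesis
    proof (subst PS.indep_vars_iff_distr_eq_PiM'[OF False])
      show "(\<lambda>zs. zs i) \<in> measurable (PiM I (\<lambda>_. Q)) Q" if "i \<in> I" for i
        by (rule measurable_component_singleton) (use that in auto)
      have "distr (PiM I (\<lambda>_. Q)) (PiM I (\<lambda>_. Q)) (\<lambda>x. \<lambda>i\<in>I. x i) = distr (PiM I (\<lambda>_. Q)) (PiM I (\<lambda>_. Q)) (\<lambda>x. x)"
        by (rule distr_cong) (auto simp: space_PiM PiE_def extensional_restrict)
      also have "\<dots> = PiM I (\<lambda>_. Q)" by simp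
      also have "\<dots> = PiM I (\<lambda>i. distr (PiM I (\<lambda>_. Q)) Q (\<lambda>\<omega>. \<omega> i))"
        by (rule PiM_cong) (auto simp: distr_PiM_component[of I "\<lambda>_. Q", OF Q])
      finally show "distr (PiM I (\<lambda>_. Q)) (PiM I (\<lambda>_. Q)) (\<lambda>x. \<lambda>i\<in>I. x i) = PiM I (\<lambda>i. distr (PiM I (\<lambda>_. Q)) Q (\<lambda>\<omega>. \<omega> i))" .
    qed
  qed
qed

lemma hoef:
  fixes Q :: "'a measure" and \<phi> :: "'a \<Rightarrow> real"
  assumes Q: "prob_space Q" and phi: "\<phi> \<in> borel_measurable Q" "\<And>x. \<bar>\<phi> x\<bar> \<le> M" and M: "M > 0"
    and N: "N > 0" and eps: "\<epsilon> \<ge> 0"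
  shows "measure (PiM {..<N} (\<lambda>_. Q)) {zs \<in> space (PiM {..<N} (\<lambda>_. Q)).
            \<bar>(\<Sum>i<N. \<phi> (zs i)) / real N - (\<integral>x. \<phi> x \<partial>Q)\<bar> \<ge> \<epsilon>}
         \<le> 2 * exp (- 2 * real N * \<epsilon>\<^sup>2 / (2 * M)\<^sup>2)"
proof -
  define I where "I = {..<N}"
  define Pi where "Pi = PiM I (\<lambda>_. Q)"
  interpret PS: prob_space Pi unfolding Pi_def by (rule prob_space_PiM) (use Q in auto)
  have I0: "0 \<in> I" using N by (simp add: I_def)
  have comp: "distr Pi Q (\<lambda>\<omega>. \<omega> i) = Q" if "i \<in> I" for i
    unfolding Pi_def by (rule distr_PiM_component) (use Q that in auto)
  have dX: "distr Pi borel (\<lambda>zs. \<phi> (zs i)) = distr Q borel \<phi>" if "i \<in> I" for i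
  proof -
    have "distr Pi borel (\<lambda>zs. \<phi> (zs i)) = distr (distr Pi Q (\<lambda>\<omega>. \<omega> i)) borel \<phi>"
      by (rule distr_distr[symmetric, simplified comp_def]) (use phi that in \<open>auto simp: Pi_def\<close>)
    thus ?thesis using comp[OF that] by simp
  qed
  have ind: "PS.indep_vars (\<lambda>_. borel) (\<lambda>i zs. \<phi> (zs i)) I"
    using PS.indep_vars_compose2[OF indep_coords[OF Q, of I, folded Pi_def], of "\<lambda>_. \<phi>" "\<lambda>_. borel"] phi
    by (simp add: I_def)
  interpret H: Hoeffding_ineq_iid Pi I "\<lambda>i zs. \<phi> (zs i)" "\<lambda>zs. \<phi> (zs 0)" "-M" M "PS.expectation (\<lambda>zs. \<phi> (zs 0))"
  proof unfold_locales
    show "finite I" by (simp add: I_def)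
    show "PS.indep_vars (\<lambda>_. borel) (\<lambda>i zs. \<phi> (zs i)) I" by (rule ind)
    show "distr Pi borel (\<lambda>zs. \<phi> (zs i)) = distr Pi borel (\<lambda>zs. \<phi> (zs 0))" if "i \<in> I" for i
      using dX[OF that] dX[OF I0] by simp
    show "(\<lambda>zs. \<phi> (zs 0)) \<in> borel_measurable Pi" unfolding Pi_def
      by (rule measurable_compose[OF measurable_component_singleton[OF I0] phi(1)])
    show "AE x in Pi. \<phi> (x 0) \<in> {- M..M}" proof (rule AE_I2)
      fix x show "\<phi> (x 0) \<in> {- M..M}" using phi(2)[of "x 0"] by (auto simp: abs_le_iff)
    qed
  qed simp
  have E: "PS.expectation (\<lambda>zs. \<phi> (zs 0)) = (\<integral>x. \<phi> x \<partial>Q)"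
  proof -
    have "PS.expectation (\<lambda>zs. \<phi> (zs 0)) = integral\<^sup>L (distr Pi Q (\<lambda>\<omega>. \<omega> 0)) \<phi>"
      by (rule integral_distr[symmetric]) (use phi I0 in \<open>auto simp: Pi_def\<close>)
    thus ?thesis using comp[OF I0] by simp
  qed
  have "PS.prob {x \<in> space Pi. \<bar>(\<Sum>i\<in>I. \<phi> (x i)) / real (card I) - PS.expectation (\<lambda>zs. \<phi> (zs 0))\<bar> \<ge> \<epsilon>}
        \<le> 2 * exp (- 2 * real (card I) * \<epsilon>\<^sup>2 / (M - - M)\<^sup>2)"
    by (rule H.Hoeffding_ineq_abs_ge'[OF eps]) (use M N in \<open>auto simp: I_def\<close>)
  thus ?thesis unfolding E by (simp add: I_def Pi_def)
qed




context hmm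
begin

interpretation mu: sigma_finite_measure \<mu> by (rule mu_sf)

abbreviation "PM N \<equiv> PiM {..<N} (\<lambda>_. \<mu>)"

definition Kern :: "nat \<Rightarrow> nat \<Rightarrow> (nat \<Rightarrow> 'a) \<Rightarrow> (nat \<Rightarrow> 'a) measure" where
  "Kern N t xs = PiM {..<N} (\<lambda>_. density \<mu> (\<lambda>x. ennreal (pf_dens \<mu> a b y N t xs x)))"

lemma sets_dens[simp]: "sets (density \<mu> f) = sets \<mu>" by simp

lemma Kern_sets: "sets (Kern N t xs) = sets (PM N)"
  unfolding Kern_def by (rule sets_PiM_cong) auto

lemma Kern_prob: assumes "t \<ge> 1" "N > 0" shows "prob_space (Kern N t xs)"
  unfolding Kern_def by (rule prob_space_PiM) (rule pf_prob[OF assms])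

lemma Kern_meas:
  assumes t: "t \<ge> 1" and N: "N > 0"
  shows "Kern N t \<in> PM N \<rightarrow>\<^sub>M prob_algebra (PM N)"
proof (rule measurable_prob_algebra_generated[OF sets_PiM Int_stable_prod_algebra prod_algebra_sets_into_space])
  show "prob_space (Kern N t xs)" for xs by (rule Kern_prob[OF t N])
  show "sets (Kern N t xs) = sets (PM N)" for xs by (rule Kern_sets)
  fix A assume "A \<in> prod_algebra {..<N} (\<lambda>_. \<mu>)"
  then obtain J E where A: "A = prod_emb {..<N} (\<lambda>_. \<mu>) J (Pi\<^sub>E J E)" "finite J" "J \<subseteq> {..<N}"
      "\<And>i. i \<in> J \<Longrightarrow> E i \<in> sets \<mu>"
    by (rule prod_algebraE) auto
  define D where "D xs = density \<mu> (\<lambda>x. ennreal (pf_dens \<mu> a b y N t xs x))" for xs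
  have pe: "prod_emb {..<N} (\<lambda>_. \<mu>) J (Pi\<^sub>E J E) = prod_emb {..<N} (\<lambda>_. D xs) J (Pi\<^sub>E J E)" for xs
    by (simp add: prod_emb_def D_def)
  have eq: "emeasure (Kern N t xs) A = (\<Prod>j\<in>J. emeasure (D xs) (E j))" for xs
    unfolding A(1) pe[of xs] Kern_def D_def[symmetric]
    by (rule emeasure_PiM_emb) (use A pf_prob[OF t N] in \<open>auto simp: D_def\<close>)
  have pm: "(\<lambda>(xs, x). pf_dens \<mu> a b y N t xs x) \<in> borel_measurable (PM N \<Otimes>\<^sub>M \<mu>)"
    by (rule pf_dens_meas[OF t N])
  have em: "(\<lambda>xs. emeasure (D xs) (E j)) \<in> borel_measurable (PM N)" if "j \<in> J" for j
  proof -
    have "(\<lambda>xs. emeasure (D xs) (E j)) = (\<lambda>xs. \<integral>\<^sup>+x. ennreal (pf_dens \<mu> a b y N t xs x) * indicator (E j) x \<partial>\<mu>)"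
    proof
      fix xs
      have "pf_dens \<mu> a b y N t xs \<in> borel_measurable \<mu>"
        unfolding pf_dens_eq[OF t N, abs_def] by measurable
      thus "emeasure (D xs) (E j) = (\<integral>\<^sup>+x. ennreal (pf_dens \<mu> a b y N t xs x) * indicator (E j) x \<partial>\<mu>)"
        unfolding D_def using A(4)[OF that] by (simp add: emeasure_density)
    qed
    also have "\<dots> \<in> borel_measurable (PM N)"
      using pm A(4)[OF that] by measurable
    finally show ?thesis .
  qed
  show "(\<lambda>xs. emeasure (Kern N t xs) A) \<in> borel_measurable (PM N)"
    unfolding eq using em by (intro borel_measurable_prod_ennreal) auto
qed

lemma a0_prob: "prob_space (density \<mu> (\<lambda>x. ennreal (a0 x)))"
proof (rule prob_spaceI)
  have "emeasure (density \<mu> (\<lambda>x. ennreal (a0 x))) UNIV = (\<integral>\<^sup>+x. ennreal (a0 x) * indicator UNIV x \<partial>\<mu>)"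
    by (rule emeasure_density) (use a0_meas sets.top[of \<mu>] in auto)
  thus "emeasure (density \<mu> (\<lambda>x. ennreal (a0 x))) (space (density \<mu> (\<lambda>x. ennreal (a0 x)))) = 1"
    using a0_dens by simp
qed

lemma pf_law_Suc: "pf_law \<mu> a0 a b y N (Suc t) = pf_law \<mu> a0 a b y N t \<bind> Kern N (Suc t)"
  by (simp add: Kern_def[abs_def])

lemma pf_law_good:
  assumes N: "N > 0"
  shows "prob_space (pf_law \<mu> a0 a b y N t) \<and> sets (pf_law \<mu> a0 a b y N t) = sets (PM N)"
proof (induction t)
  case 0
  show ?case using a0_prob by (auto intro!: prob_space_PiM sets_PiM_cong)
next
  case (Suc t)
  have A: "pf_law \<mu> a0 a b y N t \<in> space (prob_algebra (PM N))"
    using Suc by (simp add: space_prob_algebra)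
  have B: "Kern N (Suc t) \<in> PM N \<rightarrow>\<^sub>M prob_algebra (PM N)" by (rule Kern_meas) (use N in auto)
  show ?case unfolding pf_law_Suc using prob_space_bind'[OF A B] sets_bind'[OF A B] by simp
qed

lemma pf_law_bind_emeasure:
  assumes N: "N > 0" and X: "X \<in> sets (PM N)"
  shows "emeasure (pf_law \<mu> a0 a b y N (Suc t)) X = (\<integral>\<^sup>+xs. emeasure (Kern N (Suc t) xs) X \<partial>pf_law \<mu> a0 a b y N t)"
proof -
  interpret P: prob_space "pf_law \<mu> a0 a b y N t" using pf_law_good[OF N] by blast
  have s: "sets (pf_law \<mu> a0 a b y N t) = sets (PM N)" using pf_law_good[OF N] by blast
  have B: "Kern N (Suc t) \<in> pf_law \<mu> a0 a b y N t \<rightarrow>\<^sub>M subprob_algebra (PM N)"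
    using measurable_prob_algebraD[OF Kern_meas[of "Suc t" N]] N measurable_cong_sets[OF s refl] by auto
  show ?thesis unfolding pf_law_Suc
    by (rule emeasure_bind[OF _ B X]) (use P.not_empty in auto)
qed

end



context hmm
begin

interpretation mu: sigma_finite_measure \<mu> by (rule mu_sf)

definition avg :: "nat \<Rightarrow> ('a \<Rightarrow> real) \<Rightarrow> (nat \<Rightarrow> 'a) \<Rightarrow> real" where
  "avg N \<phi> xs = (\<Sum>i<N. \<phi> (xs i)) / real N"

lemma sets_law: "N > 0 \<Longrightarrow> sets (pf_law \<mu> a0 a b y N t) = sets (PM N)"
  using pf_law_good by blast

lemma prob_law: "N > 0 \<Longrightarrow> prob_space (pf_law \<mu> a0 a b y N t)"
  using pf_law_good by blast

lemma space_law: "N > 0 \<Longrightarrow> space (pf_law \<mu> a0 a b y N t) = space (PM N)"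
  using sets_eq_imp_space_eq[OF sets_law] by blast

lemma meas_law: "N > 0 \<Longrightarrow> f \<in> borel_measurable (PM N) \<Longrightarrow> f \<in> borel_measurable (pf_law \<mu> a0 a b y N t)"
  using measurable_cong_sets[OF sets_law refl] by blast

lemma step_bound:
  assumes N: "N > 0" and eps: "\<epsilon> > 0" and phi: "\<phi> \<in> borel_measurable \<mu>" "\<And>x. \<bar>\<phi> x\<bar> \<le> M" and M: "M > 0"
  shows "measure (pf_law \<mu> a0 a b y N (Suc t)) {zs \<in> space (pf_law \<mu> a0 a b y N (Suc t)). \<epsilon> \<le> \<bar>avg N \<phi> zs - v\<bar>}
     \<le> 2 * exp (- 2 * real N * (\<epsilon>/2)\<^sup>2 / (2 * M)\<^sup>2)
       + measure (pf_law \<mu> a0 a b y N t) {xs \<in> space (pf_law \<mu> a0 a b y N t).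
            \<epsilon>/2 \<le> \<bar>(\<Sum>i<N. Lop \<mu> a b y (Suc t) \<phi> (xs i)) / (\<Sum>i<N. Lop \<mu> a b y (Suc t) (\<lambda>_. 1) (xs i)) - v\<bar>}"
proof -
  let ?P = "pf_law \<mu> a0 a b y N t"
  let ?P' = "pf_law \<mu> a0 a b y N (Suc t)"
  define c where "c xs = (\<Sum>i<N. Lop \<mu> a b y (Suc t) \<phi> (xs i)) / (\<Sum>i<N. Lop \<mu> a b y (Suc t) (\<lambda>_. 1) (xs i))" for xs
  define A where "A = {zs \<in> space (PM N). \<epsilon> \<le> \<bar>avg N \<phi> zs - v\<bar>}"
  define B where "B = {xs \<in> space ?P. \<epsilon>/2 \<le> \<bar>c xs - v\<bar>}"
  define h where "h = 2 * exp (- 2 * real N * (\<epsilon>/2)\<^sup>2 / (2 * M)\<^sup>2)"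
  interpret P: prob_space ?P by (rule prob_law[OF N])
  have t1: "Suc t \<ge> 1" by simp
  have Am: "A \<in> sets (PM N)" unfolding A_def avg_def using phi by measurable
  have cm: "c \<in> borel_measurable (PM N)" unfolding c_def using phi by measurable
  have Bm: "B \<in> sets ?P"
  proof -
    note cm' = meas_law[OF N cm, of t]
    have "(\<lambda>xs. \<bar>c xs - v\<bar>) \<in> borel_measurable ?P" using cm' by (intro borel_measurable_abs borel_measurable_diff) auto
    from borel_measurable_le[OF borel_measurable_const[of "\<epsilon>/2"] this] show "B \<in> sets ?P"
      unfolding B_def by (simp add: pred_def)
  qed
  have A': "{zs \<in> space ?P'. \<epsilon> \<le> \<bar>avg N \<phi> zs - v\<bar>} = A" unfolding A_def space_law[OF N] ..
  have kb: "emeasure (Kern N (Suc t) xs) A \<le> ennreal h + indicator B xs" if xs: "xs \<in> space ?P" for xs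
  proof (cases "xs \<in> B")
    case True
    interpret K: prob_space "Kern N (Suc t) xs" by (rule Kern_prob[OF t1 N])
    have "emeasure (Kern N (Suc t) xs) A \<le> 1" by (rule K.emeasure_le_1)
    also have "\<dots> \<le> ennreal h + indicator B xs" using True by simp
    finally show ?thesis .
  next
    case False
    hence cv: "\<bar>c xs - v\<bar> < \<epsilon>/2" using xs unfolding B_def by auto
    define Q where "Q = density \<mu> (\<lambda>x. ennreal (pf_dens \<mu> a b y N (Suc t) xs x))"
    have Q: "prob_space Q" unfolding Q_def by (rule pf_prob[OF t1 N])
    have pm: "pf_dens \<mu> a b y N (Suc t) xs \<in> borel_measurable \<mu>"
      unfolding pf_dens_eq[OF t1 N, abs_def] by measurable
    have phiQ: "\<phi> \<in> borel_measurable Q" using phi unfolding Q_def by simp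
    have EQ: "(\<integral>x. \<phi> x \<partial>Q) = c xs"
    proof -
      have "(\<integral>x. \<phi> x \<partial>Q) = (\<integral>x. pf_dens \<mu> a b y N (Suc t) xs x * \<phi> x \<partial>\<mu>)"
        unfolding Q_def by (subst integral_density) (use pm phi pf_dens_nn in auto)
      also have "\<dots> = c xs" unfolding c_def by (rule pf_integral[OF t1 N phi])
      finally show ?thesis .
    qed
    have sub: "A \<subseteq> {zs \<in> space (PiM {..<N} (\<lambda>_. Q)). \<epsilon>/2 \<le> \<bar>(\<Sum>i<N. \<phi> (zs i)) / real N - (\<integral>x. \<phi> x \<partial>Q)\<bar>}"
    proof -
      have sp: "space (PiM {..<N} (\<lambda>_. Q)) = space (PM N)" by (simp add: space_PiM Q_def)
      have tri: "\<epsilon>/2 \<le> \<bar>S - c xs\<bar>" if "\<epsilon> \<le> \<bar>S - v\<bar>" for S using cv that by arith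
      show ?thesis unfolding sp A_def EQ avg_def using tri by auto
    qed
    have "emeasure (Kern N (Suc t) xs) A = ennreal (measure (PiM {..<N} (\<lambda>_. Q)) A)"
      unfolding Kern_def Q_def[symmetric]
      by (rule finite_measure.emeasure_eq_measure[OF prob_space.axioms(1)[OF prob_space_PiM[OF Q]]])
    also have "\<dots> \<le> ennreal (measure (PiM {..<N} (\<lambda>_. Q)) {zs \<in> space (PiM {..<N} (\<lambda>_. Q)). \<epsilon>/2 \<le> \<bar>(\<Sum>i<N. \<phi> (zs i)) / real N - (\<integral>x. \<phi> x \<partial>Q)\<bar>})"
    proof (intro ennreal_leI finite_measure.finite_measure_mono[OF prob_space.axioms(1)[OF prob_space_PiM[OF Q]] sub])
      show "{zs \<in> space (PiM {..<N} (\<lambda>_. Q)). \<epsilon>/2 \<le> \<bar>(\<Sum>i<N. \<phi> (zs i)) / real N - (\<integral>x. \<phi> x \<partial>Q)\<bar>} \<in> sets (PiM {..<N} (\<lambda>_. Q))"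
      proof -
        have "(\<lambda>zs. \<bar>(\<Sum>i<N. \<phi> (zs i)) / real N - (\<integral>x. \<phi> x \<partial>Q)\<bar>) \<in> borel_measurable (PiM {..<N} (\<lambda>_. Q))"
          using phiQ by measurable
        from borel_measurable_le[OF borel_measurable_const[of "\<epsilon>/2"] this] show ?thesis by (simp add: pred_def)
      qed
    qed
    also have "\<dots> \<le> ennreal h"
      unfolding h_def by (intro ennreal_leI hoef[OF Q phiQ phi(2) M N]) (use eps in auto)
    also have "\<dots> \<le> ennreal h + indicator B xs" by simp
    finally show ?thesis .
  qed
  have "emeasure ?P' A = (\<integral>\<^sup>+xs. emeasure (Kern N (Suc t) xs) A \<partial>?P)"
    by (rule pf_law_bind_emeasure[OF N Am])
  also have "\<dots> \<le> (\<integral>\<^sup>+xs. ennreal h + indicator B xs \<partial>?P)"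
    by (intro nn_integral_mono) (use kb in auto)
  also have "\<dots> = ennreal h + emeasure ?P B"
    using Bm by (subst nn_integral_add) (auto simp: P.emeasure_space_1)
  also have "\<dots> = ennreal (h + measure ?P B)"
    using P.emeasure_eq_measure by (simp add: h_def ennreal_plus)
  finally have "emeasure ?P' A \<le> ennreal (h + measure ?P B)" .
  moreover have "emeasure ?P' A = ennreal (measure ?P' A)"
    by (rule finite_measure.emeasure_eq_measure[OF prob_space.axioms(1)[OF prob_law[OF N]]])
  ultimately have "ennreal (measure ?P' A) \<le> ennreal (h + measure ?P B)" by simp
  moreover have "h + measure ?P B \<ge> 0" unfolding h_def by simp
  ultimately have "measure ?P' A \<le> h + measure ?P B" by (simp add: ennreal_le_iff)
  thus ?thesis unfolding A' h_def B_def c_def .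
qed

end



lemma alg:
  fixes p q mp k e M :: real
  assumes "q > 0" "k > 0" "M > 0" "\<bar>p\<bar> \<le> M * q" "\<bar>p - mp\<bar> < e * k / 4" "\<bar>q - k\<bar> < e * k / (4 * M)"
  shows "\<bar>p / q - mp / k\<bar> < e / 2"
proof -
  have eq: "p / q - mp / k = (p - mp) / k + (p / q) * (k - q) / k"
    using assms(1,2) by (simp add: field_simps)
  have pq: "\<bar>p / q\<bar> \<le> M"
  proof -
    have "\<bar>p / q\<bar> = \<bar>p\<bar> / q" using assms(1) by (simp add: abs_divide)
    also have "\<dots> \<le> M" using assms(1,4) by (simp add: pos_divide_le_eq)
    finally show ?thesis .
  qed
  have t1: "\<bar>(p - mp) / k\<bar> < e / 4"
  proof -
    have "\<bar>(p - mp) / k\<bar> = \<bar>p - mp\<bar> / k" using assms(2) by (simp add: abs_divide)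
    also have "\<dots> < e / 4" using assms(2,5) by (simp add: pos_divide_less_eq)
    finally show ?thesis .
  qed
  have "\<bar>(p / q) * (k - q)\<bar> \<le> M * \<bar>k - q\<bar>" unfolding abs_mult by (rule mult_right_mono[OF pq]) simp
  also have "\<dots> < M * (e * k / (4 * M))" using assms(6) by (intro mult_strict_left_mono[OF _ assms(3)]) (simp add: abs_minus_commute)
  also have "\<dots> = e * k / 4" using assms(3) by simp
  finally have t2': "\<bar>(p / q) * (k - q)\<bar> < e * k / 4" .
  have gen: "\<And>X. \<bar>X\<bar> < e * k / 4 \<Longrightarrow> \<bar>X / k\<bar> < e / 4"
    using assms(2) by (simp add: abs_divide pos_divide_less_eq)
  have t2: "\<bar>(p / q) * (k - q) / k\<bar> < e / 4" by (rule gen[OF t2'])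
  show ?thesis unfolding eq using t1 t2 by linarith
qed

lemma exp_rate:
  fixes c c' x :: real
  assumes "c \<le> c'" "x \<ge> 0"
  shows "exp (- c' * x) \<le> exp (- c * x)"
  using assms by (simp add: mult_right_mono)

context hmm
begin

definition conc :: "nat \<Rightarrow> ('a \<Rightarrow> real) \<Rightarrow> bool" where
  "conc t \<phi> \<longleftrightarrow> (\<exists>C c. C \<ge> 0 \<and> c > 0 \<and> (\<forall>N>0. \<forall>\<epsilon>>0.
     measure (pf_law \<mu> a0 a b y N t) {xs \<in> space (pf_law \<mu> a0 a b y N t). \<epsilon> \<le> \<bar>avg N \<phi> xs - mfilt \<mu> a0 a b y t \<phi>\<bar>}
       \<le> C * exp (- c * (real N * \<epsilon>\<^sup>2))))"

lemma conc0:
  assumes phi: "\<phi> \<in> borel_measurable \<mu>" "\<And>x. \<bar>\<phi> x\<bar> \<le> M"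
  shows "conc 0 \<phi>"
proof -
  define M' where "M' = max M 1"
  have M': "M' > 0" "\<And>x. \<bar>\<phi> x\<bar> \<le> M'" unfolding M'_def
    by (simp, metis phi(2) le_max_iff_disj)
  define Q where "Q = density \<mu> (\<lambda>x. ennreal (a0 x))"
  have Q: "prob_space Q" unfolding Q_def by (rule a0_prob)
  have phiQ: "\<phi> \<in> borel_measurable Q" using phi unfolding Q_def by simp
  have EQ: "(\<integral>x. \<phi> x \<partial>Q) = mfilt \<mu> a0 a b y 0 \<phi>"
  proof -
    have "(\<integral>x. \<phi> x \<partial>Q) = (\<integral>x. a0 x * \<phi> x \<partial>\<mu>)"
      unfolding Q_def by (subst integral_density) (use phi a0_meas a0_nn in auto)
    thus ?thesis unfolding mfilt_def by (simp add: mult.commute)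
  qed
  show ?thesis unfolding conc_def
  proof (intro exI conjI allI impI)
    show "(2::real) \<ge> 0" by simp
    show "1 / (2 * M'\<^sup>2) > 0" using M' by simp
    fix N :: nat and \<epsilon> :: real assume N: "N > 0" and eps: "\<epsilon> > 0"
    have law: "pf_law \<mu> a0 a b y N 0 = PiM {..<N} (\<lambda>_. Q)" unfolding Q_def by simp
    have "measure (PiM {..<N} (\<lambda>_. Q)) {zs \<in> space (PiM {..<N} (\<lambda>_. Q)).
            \<epsilon> \<le> \<bar>(\<Sum>i<N. \<phi> (zs i)) / real N - (\<integral>x. \<phi> x \<partial>Q)\<bar>}
         \<le> 2 * exp (- 2 * real N * \<epsilon>\<^sup>2 / (2 * M')\<^sup>2)"
      by (rule hoef[OF Q phiQ M'(2) M'(1) N]) (use eps in simp)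
    also have "- 2 * real N * \<epsilon>\<^sup>2 / (2 * M')\<^sup>2 = - (1 / (2 * M'\<^sup>2)) * (real N * \<epsilon>\<^sup>2)"
      using M' by (simp add: power2_eq_square field_simps)
    finally show "measure (pf_law \<mu> a0 a b y N 0) {xs \<in> space (pf_law \<mu> a0 a b y N 0). \<epsilon> \<le> \<bar>avg N \<phi> xs - mfilt \<mu> a0 a b y 0 \<phi>\<bar>}
       \<le> 2 * exp (- (1 / (2 * M'\<^sup>2)) * (real N * \<epsilon>\<^sup>2))"
      unfolding law avg_def EQ .
  qed
qed

lemma set_meas_law:
  fixes f :: "(nat \<Rightarrow> 'a) \<Rightarrow> real"
  assumes N: "N > 0" and f: "f \<in> borel_measurable (PM N)"
  shows "{xs \<in> space (pf_law \<mu> a0 a b y N t). r \<le> f xs} \<in> sets (pf_law \<mu> a0 a b y N t)"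
proof -
  from borel_measurable_le[OF borel_measurable_const[of r] meas_law[OF N f, of t]]
  show ?thesis by (simp add: pred_def)
qed

lemma avg_meas:
  assumes "\<phi> \<in> borel_measurable \<mu>"
  shows "(\<lambda>xs. \<bar>avg N (Lop \<mu> a b y t \<phi>) xs - v\<bar>) \<in> borel_measurable (PM N)"
  unfolding avg_def using assms by measurable

lemma conc_Suc:
  assumes IH: "\<And>\<phi> M. \<phi> \<in> borel_measurable \<mu> \<Longrightarrow> (\<And>x. \<bar>\<phi> x\<bar> \<le> M) \<Longrightarrow> conc t \<phi>"
    and phi: "\<phi> \<in> borel_measurable \<mu>" "\<And>x. \<bar>\<phi> x\<bar> \<le> M"
  shows "conc (Suc t) \<phi>"
proof -
  define M' where "M' = max M 1"
  have M': "M' > 0" "\<And>x. \<bar>\<phi> x\<bar> \<le> M'" unfolding M'_def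
    by (simp, metis phi(2) le_max_iff_disj)
  have t1: "Suc t \<ge> 1" by simp
  obtain BL where BL: "BL > 0" "\<And>x. Lop \<mu> a b y (Suc t) (\<lambda>_. 1) x \<le> BL" using L1_bdd[OF t1] by blast
  define \<Phi> where "\<Phi> = Lop \<mu> a b y (Suc t) \<phi>"
  define Ob where "Ob = Lop \<mu> a b y (Suc t) (\<lambda>_. 1)"
  have Opos: "Ob x > 0" for x unfolding Ob_def by (rule A0_pos[OF t1])
  have \<Phi>m: "\<Phi> \<in> borel_measurable \<mu>" unfolding \<Phi>_def using phi(1) by measurable
  have Om: "Ob \<in> borel_measurable \<mu>" unfolding Ob_def by measurable
  have \<Phi>b: "\<bar>\<Phi> x\<bar> \<le> M' * Ob x" for x unfolding \<Phi>_def Ob_def by (rule L_bound[OF t1 phi(1) M'(2)])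
  have \<Phi>B: "\<bar>\<Phi> x\<bar> \<le> M' * BL" for x
    using \<Phi>b[of x] mult_left_mono[OF BL(2)[of x] less_imp_le[OF M'(1)]] unfolding Ob_def by linarith
  have OB: "\<bar>Ob x\<bar> \<le> BL" for x using Opos[of x] BL(2)[of x] unfolding Ob_def by simp
  obtain C1 c1 where C1: "C1 \<ge> 0" "c1 > 0" and
    b1: "\<And>N \<epsilon>. N > 0 \<Longrightarrow> \<epsilon> > 0 \<Longrightarrow> measure (pf_law \<mu> a0 a b y N t) {xs \<in> space (pf_law \<mu> a0 a b y N t). \<epsilon> \<le> \<bar>avg N \<Phi> xs - mfilt \<mu> a0 a b y t \<Phi>\<bar>}
       \<le> C1 * exp (- c1 * (real N * \<epsilon>\<^sup>2))"
    using IH[OF \<Phi>m \<Phi>B] unfolding conc_def by blast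
  obtain C2 c2 where C2: "C2 \<ge> 0" "c2 > 0" and
    b2: "\<And>N \<epsilon>. N > 0 \<Longrightarrow> \<epsilon> > 0 \<Longrightarrow> measure (pf_law \<mu> a0 a b y N t) {xs \<in> space (pf_law \<mu> a0 a b y N t). \<epsilon> \<le> \<bar>avg N Ob xs - mfilt \<mu> a0 a b y t Ob\<bar>}
       \<le> C2 * exp (- c2 * (real N * \<epsilon>\<^sup>2))"
    using IH[OF Om OB] unfolding conc_def by blast
  define \<kappa> where "\<kappa> = kappa \<mu> a0 a b y (Suc t)"
  have \<kappa>: "\<kappa> > 0" unfolding \<kappa>_def by (rule A0_kappa[OF t1])
  have \<kappa>eq: "\<kappa> = mfilt \<mu> a0 a b y t Ob" unfolding \<kappa>_def kappa_eq mfilt_def Ob_def by (simp add: mult.commute)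
  have \<nu>eq: "mfilt \<mu> a0 a b y (Suc t) \<phi> = mfilt \<mu> a0 a b y t \<Phi> / \<kappa>"
  proof -
    have "mfilt \<mu> a0 a b y (Suc t) \<phi> = (\<integral>u. filt \<mu> a0 a b y t u * \<Phi> u \<partial>\<mu>) / \<kappa>"
      using mfilt_step[OF t1 phi(1) M'(2)] by (simp add: \<kappa>_def \<Phi>_def)
    moreover have "(\<integral>u. filt \<mu> a0 a b y t u * \<Phi> u \<partial>\<mu>) = mfilt \<mu> a0 a b y t \<Phi>"
      unfolding mfilt_def by (simp add: mult.commute)
    ultimately show ?thesis by simp
  qed
  define c where "c = min (1 / (8 * M'\<^sup>2)) (min (c1 * \<kappa>\<^sup>2 / 16) (c2 * \<kappa>\<^sup>2 / (16 * M'\<^sup>2)))"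
  have c: "c > 0" unfolding c_def using M' \<kappa> C1 C2 by simp
  show ?thesis unfolding conc_def
  proof (intro exI conjI allI impI)
    show "2 + C1 + C2 \<ge> 0" using C1 C2 by simp
    show "c > 0" by (rule c)
    fix N :: nat and \<epsilon> :: real assume N: "N > 0" and eps: "\<epsilon> > 0"
    let ?P = "pf_law \<mu> a0 a b y N t"
    interpret P: prob_space ?P by (rule prob_law[OF N])
    define E where "E = exp (- c * (real N * \<epsilon>\<^sup>2))"
    have x0: "real N * \<epsilon>\<^sup>2 \<ge> 0" by simp
    define B where "B = {xs \<in> space ?P. \<epsilon>/2 \<le> \<bar>(\<Sum>i<N. \<Phi> (xs i)) / (\<Sum>i<N. Ob (xs i)) - mfilt \<mu> a0 a b y (Suc t) \<phi>\<bar>}"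
    define B1 where "B1 = {xs \<in> space ?P. \<epsilon> * \<kappa> / 4 \<le> \<bar>avg N \<Phi> xs - mfilt \<mu> a0 a b y t \<Phi>\<bar>}"
    define B2 where "B2 = {xs \<in> space ?P. \<epsilon> * \<kappa> / (4 * M') \<le> \<bar>avg N Ob xs - mfilt \<mu> a0 a b y t Ob\<bar>}"
    have sb: "measure (pf_law \<mu> a0 a b y N (Suc t)) {zs \<in> space (pf_law \<mu> a0 a b y N (Suc t)). \<epsilon> \<le> \<bar>avg N \<phi> zs - mfilt \<mu> a0 a b y (Suc t) \<phi>\<bar>}
      \<le> 2 * exp (- 2 * real N * (\<epsilon>/2)\<^sup>2 / (2 * M')\<^sup>2) + measure ?P B"
      unfolding B_def \<Phi>_def Ob_def by (rule step_bound[OF N eps phi(1) M'(2) M'(1)])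
    have B1m: "B1 \<in> sets ?P" unfolding B1_def \<Phi>_def by (rule set_meas_law[OF N avg_meas[OF phi(1)]])
    have B2m: "B2 \<in> sets ?P" unfolding B2_def Ob_def by (rule set_meas_law[OF N avg_meas]) simp
    have sub: "B \<subseteq> B1 \<union> B2"
    proof
      fix xs assume xs: "xs \<in> B"
      show "xs \<in> B1 \<union> B2"
      proof (rule ccontr)
        assume "xs \<notin> B1 \<union> B2"
        hence n1: "\<bar>avg N \<Phi> xs - mfilt \<mu> a0 a b y t \<Phi>\<bar> < \<epsilon> * \<kappa> / 4"
          and n2: "\<bar>avg N Ob xs - \<kappa>\<bar> < \<epsilon> * \<kappa> / (4 * M')"
          using xs unfolding B_def B1_def B2_def \<kappa>eq by auto
        have qpos: "avg N Ob xs > 0" unfolding avg_def using N Opos by (intro divide_pos_pos sum_pos) auto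
        have pq: "\<bar>avg N \<Phi> xs\<bar> \<le> M' * avg N Ob xs"
        proof -
          have "\<bar>\<Sum>i<N. \<Phi> (xs i)\<bar> \<le> (\<Sum>i<N. \<bar>\<Phi> (xs i)\<bar>)" by (rule sum_abs)
          also have "\<dots> \<le> (\<Sum>i<N. M' * Ob (xs i))" by (intro sum_mono \<Phi>b)
          finally show ?thesis unfolding avg_def using N by (simp add: abs_divide sum_distrib_left divide_right_mono)
        qed
        have "\<bar>avg N \<Phi> xs / avg N Ob xs - mfilt \<mu> a0 a b y t \<Phi> / \<kappa>\<bar> < \<epsilon> / 2"
          by (rule alg[OF qpos \<kappa> M'(1) pq n1 n2])
        moreover have "avg N \<Phi> xs / avg N Ob xs = (\<Sum>i<N. \<Phi> (xs i)) / (\<Sum>i<N. Ob (xs i))"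
          unfolding avg_def using N by simp
        ultimately show False using xs unfolding B_def \<nu>eq by auto
      qed
    qed
    have "measure ?P B \<le> measure ?P (B1 \<union> B2)" using B1m B2m sub by (intro P.finite_measure_mono) auto
    also have "\<dots> \<le> measure ?P B1 + measure ?P B2" using B1m B2m by (intro measure_Un_le) auto
    also have "\<dots> \<le> C1 * exp (- c1 * (real N * (\<epsilon> * \<kappa> / 4)\<^sup>2)) + C2 * exp (- c2 * (real N * (\<epsilon> * \<kappa> / (4 * M'))\<^sup>2))"
      unfolding B1_def B2_def using N eps \<kappa> M' by (intro add_mono b1 b2) auto
    also have "\<dots> \<le> C1 * E + C2 * E"
    proof (intro add_mono mult_left_mono C1 C2)
      have "exp (- c1 * (real N * (\<epsilon> * \<kappa> / 4)\<^sup>2)) = exp (- (c1 * \<kappa>\<^sup>2 / 16) * (real N * \<epsilon>\<^sup>2))"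
        by (simp add: power2_eq_square field_simps)
      also have "\<dots> \<le> E" unfolding E_def by (rule exp_rate[OF _ x0]) (simp add: c_def)
      finally show "exp (- c1 * (real N * (\<epsilon> * \<kappa> / 4)\<^sup>2)) \<le> E" .
      have "exp (- c2 * (real N * (\<epsilon> * \<kappa> / (4 * M'))\<^sup>2)) = exp (- (c2 * \<kappa>\<^sup>2 / (16 * M'\<^sup>2)) * (real N * \<epsilon>\<^sup>2))"
        using M' by (simp add: power2_eq_square field_simps)
      also have "\<dots> \<le> E" unfolding E_def by (rule exp_rate[OF _ x0]) (simp add: c_def)
      finally show "exp (- c2 * (real N * (\<epsilon> * \<kappa> / (4 * M'))\<^sup>2)) \<le> E" .
    qed
    finally have mB: "measure ?P B \<le> C1 * E + C2 * E" .
    have e0: "exp (- 2 * real N * (\<epsilon>/2)\<^sup>2 / (2 * M')\<^sup>2) \<le> E"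
    proof -
      have "exp (- 2 * real N * (\<epsilon>/2)\<^sup>2 / (2 * M')\<^sup>2) = exp (- (1 / (8 * M'\<^sup>2)) * (real N * \<epsilon>\<^sup>2))"
        using M' by (simp add: power2_eq_square field_simps)
      also have "\<dots> \<le> E" unfolding E_def by (rule exp_rate[OF _ x0]) (simp add: c_def)
      finally show ?thesis .
    qed
    show "measure (pf_law \<mu> a0 a b y N (Suc t)) {zs \<in> space (pf_law \<mu> a0 a b y N (Suc t)). \<epsilon> \<le> \<bar>avg N \<phi> zs - mfilt \<mu> a0 a b y (Suc t) \<phi>\<bar>}
       \<le> (2 + C1 + C2) * exp (- c * (real N * \<epsilon>\<^sup>2))"
      using sb mB e0 unfolding E_def[symmetric] by (simp add: algebra_simps)
  qed
qed

lemma conc_all: "\<phi> \<in> borel_measurable \<mu> \<Longrightarrow> (\<And>x. \<bar>\<phi> x\<bar> \<le> M) \<Longrightarrow> conc t \<phi>"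
proof (induction t arbitrary: \<phi> M)
  case 0 thus ?case by (rule conc0)
next
  case (Suc t) thus ?case by (intro conc_Suc) auto
qed

end


lemma alg2:
  fixes p q mp k M s bb \<eta> \<delta> :: real
  assumes q: "q > 0" and k: "k > 0" and M: "M > 0" and s: "s > 0" and bb: "bb > 0"
    and pq: "\<bar>p\<bar> \<le> M * q" and h1: "\<bar>p - mp\<bar> < \<eta>" and h2: "\<bar>q - k\<bar> < \<eta>"
    and eta: "\<eta>\<^sup>2 * (1 + M) * s = \<delta> * k\<^sup>2 * bb"
  shows "\<bar>s / bb * (p / q - mp / k) - 1 / (bb * s * k) * (s\<^sup>2 * p - mp / k * (s\<^sup>2 * q))\<bar> \<le> \<delta>"
proof -
  define D where "D = p / q - mp / k"
  have expr: "s / bb * (p / q - mp / k) - 1 / (bb * s * k) * (s\<^sup>2 * p - mp / k * (s\<^sup>2 * q))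
      = s / bb * D * ((k - q) / k)"
    unfolding D_def using q k s bb by (simp add: field_simps power2_eq_square)
  have eq: "D = (p - mp) / k + (p / q) * (k - q) / k"
    unfolding D_def using q k by (simp add: field_simps)
  have pq': "\<bar>p / q\<bar> \<le> M"
  proof -
    have "\<bar>p / q\<bar> = \<bar>p\<bar> / q" using q by (simp add: abs_divide)
    also have "\<dots> \<le> M" using q pq by (simp add: pos_divide_le_eq)
    finally show ?thesis .
  qed
  have e0: "\<eta> > 0" using h1 by linarith
  have "\<bar>(p / q) * (k - q)\<bar> \<le> M * \<bar>k - q\<bar>" unfolding abs_mult by (rule mult_right_mono[OF pq']) simp
  also have "\<dots> \<le> M * \<eta>" using h2 M by (intro mult_left_mono) (auto simp: abs_minus_commute)
  finally have a2: "\<bar>(p / q) * (k - q)\<bar> \<le> M * \<eta>" .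
  have gd: "\<And>X. \<bar>X / k\<bar> = \<bar>X\<bar> / k" using k by (simp add: abs_divide)
  have "\<bar>D\<bar> \<le> \<bar>(p - mp) / k\<bar> + \<bar>(p / q) * (k - q) / k\<bar>" unfolding eq by (rule abs_triangle_ineq)
  also have "\<dots> = \<bar>p - mp\<bar> / k + \<bar>(p / q) * (k - q)\<bar> / k" by (simp only: gd)
  also have "\<dots> \<le> \<eta> / k + M * \<eta> / k" using h1 a2 k by (intro add_mono divide_right_mono) auto
  finally have Db: "\<bar>D\<bar> \<le> (1 + M) * \<eta> / k" by (simp add: add_divide_distrib distrib_right)
  have kq: "\<bar>(k - q) / k\<bar> \<le> \<eta> / k" using h2 k by (simp add: abs_divide abs_minus_commute divide_right_mono)
  have "\<bar>s / bb * D * ((k - q) / k)\<bar> = s / bb * (\<bar>D\<bar> * \<bar>(k - q) / k\<bar>)"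
    by (simp only: abs_mult abs_of_pos[OF divide_pos_pos[OF s bb]] mult.assoc)
  also have "\<dots> \<le> s / bb * ((1 + M) * \<eta> / k * (\<eta> / k))"
    using Db kq s bb M e0 k by (intro mult_left_mono mult_mono) auto
  also have "\<dots> = (\<eta>\<^sup>2 * (1 + M) * s) / (bb * k\<^sup>2)" using bb k by (simp add: field_simps power2_eq_square)
  also have "\<dots> = \<delta>" unfolding eta using bb k by simp
  finally show ?thesis unfolding expr .
qed

lemma limsup_final:
  fixes P :: "nat \<Rightarrow> real" and bN :: "nat \<Rightarrow> real" and C K :: real
  assumes bN_pos: "\<And>N. bN N > 0"
    and bN_lim: "filterlim bN at_top sequentially"
    and bN_lim2: "filterlim (\<lambda>N. sqrt (real N) / bN N) at_top sequentially"
    and C: "C > 0" and K: "K > 0"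
    and bound: "\<And>N. N > 0 \<Longrightarrow> P N \<le> C * exp (- K * (sqrt (real N) * bN N))"
  shows "limsup (\<lambda>N. eln (P N) / ereal ((bN N)\<^sup>2)) = -\<infinity>"
proof -
  define g where "g N = ln C / (bN N)\<^sup>2 - K * (sqrt (real N) / bN N)" for N
  have le: "eventually (\<lambda>N. eln (P N) / ereal ((bN N)\<^sup>2) \<le> ereal (g N)) sequentially"
    using eventually_gt_at_top[of 0]
  proof eventually_elim
    case (elim N)
    have b2: "(bN N)\<^sup>2 > 0" using bN_pos[of N] by simp
    show ?case
    proof (cases "P N \<le> 0")
      case True
      thus ?thesis using b2 by (simp add: eln_def divide_ereal_def)
    next
      case False
      hence Pp: "P N > 0" by simp
      have "ln (P N) \<le> ln (C * exp (- K * (sqrt (real N) * bN N)))"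
        using Pp bound[OF elim] by (subst ln_le_cancel_iff) auto
      also have "\<dots> = ln C - K * (sqrt (real N) * bN N)" using C by (simp add: ln_mult)
      finally have l: "ln (P N) \<le> ln C - K * (sqrt (real N) * bN N)" .
      have "ln (P N) / (bN N)\<^sup>2 \<le> (ln C - K * (sqrt (real N) * bN N)) / (bN N)\<^sup>2"
        using l b2 by (intro divide_right_mono) auto
      also have "\<dots> = g N" unfolding g_def using bN_pos[of N] by (simp add: field_simps power2_eq_square)
      finally show ?thesis using Pp b2 by (simp add: eln_def)
    qed
  qed
  have glim: "filterlim g at_bot sequentially"
  proof -
    have b2lim: "filterlim (\<lambda>N. (bN N)\<^sup>2) at_top sequentially"
      by (rule filterlim_pow_at_top[OF _ bN_lim]) simp
    have t0: "(\<lambda>N. ln C / (bN N)\<^sup>2) \<longlonglongrightarrow> 0"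
      by (rule tendsto_divide_0[OF tendsto_const]) (rule filterlim_at_top_imp_at_infinity[OF b2lim])
    have t1: "filterlim (\<lambda>N. K * (sqrt (real N) / bN N)) at_top sequentially"
      by (rule filterlim_tendsto_pos_mult_at_top[OF tendsto_const K bN_lim2])
    have "filterlim (\<lambda>N. - (ln C / (bN N)\<^sup>2) + K * (sqrt (real N) / bN N)) at_top sequentially"
      by (rule filterlim_tendsto_add_at_top[OF tendsto_minus[OF t0] t1])
    thus ?thesis unfolding filterlim_uminus_at_bot g_def by simp
  qed
  have "limsup (\<lambda>N. eln (P N) / ereal ((bN N)\<^sup>2)) \<le> limsup (\<lambda>N. ereal (g N))"
    by (rule Limsup_mono[OF le])
  also have "limsup (\<lambda>N. ereal (g N)) = -\<infinity>"
  proof (rule lim_imp_Limsup)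
    show "((\<lambda>N. ereal (g N)) \<longlongrightarrow> -\<infinity>) sequentially"
      using glim ereal_tendsto_simps2(3)[of g sequentially] by (simp add: comp_def)
  qed simp
  finally show ?thesis by simp
qed



lemma limsup_final':
  fixes P :: "nat \<Rightarrow> real" and bN :: "nat \<Rightarrow> real"
  assumes bN_pos: "\<And>N. bN N > 0"
    and bN_lim: "filterlim bN at_top sequentially"
    and bN_lim2: "filterlim (\<lambda>N. sqrt (real N) / bN N) at_top sequentially"
    and ex: "\<exists>C K. C > 0 \<and> K > 0 \<and> (\<forall>N>0. P N \<le> C * exp (- K * (sqrt (real N) * bN N)))"
  shows "limsup (\<lambda>N. eln (P N) / ereal ((bN N)\<^sup>2)) = -\<infinity>"
proof -
  from ex obtain C K where "C > 0" "K > 0" "\<forall>N>0. P N \<le> C * exp (- K * (sqrt (real N) * bN N))" by blast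
  thus ?thesis using limsup_final[OF bN_pos bN_lim bN_lim2, of C K P] by blast
qed

context hmm
begin

lemma main_bound:
  fixes \<psi> :: "'a \<Rightarrow> real" and bN :: "nat \<Rightarrow> real"
  assumes psi: "\<psi> \<in> borel_measurable \<mu>" "\<And>x. \<bar>\<psi> x\<bar> \<le> M"
    and bN_pos: "\<And>N. bN N > 0" and delta: "\<delta> > 0"
  shows "\<exists>C K. C > 0 \<and> K > 0 \<and> (\<forall>N>0. measure (pf_law \<mu> a0 a b y N t)
            {xs \<in> space (pf_law \<mu> a0 a b y N t).
               \<bar> sqrt (real N) / bN N *
                   ((\<Sum>i<N. Lop \<mu> a b y (Suc t) \<psi> (xs i)) / (\<Sum>i<N. Lop \<mu> a b y (Suc t) (\<lambda>_. 1) (xs i))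
                    - mfilt \<mu> a0 a b y (Suc t) \<psi>)
                 - 1 / (bN N * sqrt (real N) * kappa \<mu> a0 a b y (Suc t)) *
                   ((\<Sum>i<N. Lop \<mu> a b y (Suc t) \<psi> (xs i))
                    - mfilt \<mu> a0 a b y (Suc t) \<psi> * (\<Sum>i<N. Lop \<mu> a b y (Suc t) (\<lambda>_. 1) (xs i))) \<bar> > \<delta>}
          \<le> C * exp (- K * (sqrt (real N) * bN N)))"
proof -
  define M' where "M' = max M 1"
  have M': "M' > 0" "\<And>x. \<bar>\<psi> x\<bar> \<le> M'" unfolding M'_def
    by (simp, metis psi(2) le_max_iff_disj)
  have t1: "Suc t \<ge> 1" by simp
  obtain BL where BL: "BL > 0" "\<And>x. Lop \<mu> a b y (Suc t) (\<lambda>_. 1) x \<le> BL" using L1_bdd[OF t1] by blast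
  define \<Phi> where "\<Phi> = Lop \<mu> a b y (Suc t) \<psi>"
  define Ob where "Ob = Lop \<mu> a b y (Suc t) (\<lambda>_. 1)"
  have Opos: "Ob x > 0" for x unfolding Ob_def by (rule A0_pos[OF t1])
  have \<Phi>m: "\<Phi> \<in> borel_measurable \<mu>" unfolding \<Phi>_def using psi(1) by measurable
  have Om: "Ob \<in> borel_measurable \<mu>" unfolding Ob_def by measurable
  have \<Phi>b: "\<bar>\<Phi> x\<bar> \<le> M' * Ob x" for x unfolding \<Phi>_def Ob_def by (rule L_bound[OF t1 psi(1) M'(2)])
  have \<Phi>B: "\<bar>\<Phi> x\<bar> \<le> M' * BL" for x
    using \<Phi>b[of x] mult_left_mono[OF BL(2)[of x] less_imp_le[OF M'(1)]] unfolding Ob_def by linarith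
  have OB: "\<bar>Ob x\<bar> \<le> BL" for x using Opos[of x] BL(2)[of x] unfolding Ob_def by simp
  obtain C1 c1 where C1: "C1 \<ge> 0" "c1 > 0" and
    b1: "\<And>N \<epsilon>. N > 0 \<Longrightarrow> \<epsilon> > 0 \<Longrightarrow> measure (pf_law \<mu> a0 a b y N t) {xs \<in> space (pf_law \<mu> a0 a b y N t). \<epsilon> \<le> \<bar>avg N \<Phi> xs - mfilt \<mu> a0 a b y t \<Phi>\<bar>}
       \<le> C1 * exp (- c1 * (real N * \<epsilon>\<^sup>2))"
    using conc_all[OF \<Phi>m \<Phi>B, of t] unfolding conc_def by blast
  obtain C2 c2 where C2: "C2 \<ge> 0" "c2 > 0" and
    b2: "\<And>N \<epsilon>. N > 0 \<Longrightarrow> \<epsilon> > 0 \<Longrightarrow> measure (pf_law \<mu> a0 a b y N t) {xs \<in> space (pf_law \<mu> a0 a b y N t). \<epsilon> \<le> \<bar>avg N Ob xs - mfilt \<mu> a0 a b y t Ob\<bar>}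
       \<le> C2 * exp (- c2 * (real N * \<epsilon>\<^sup>2))"
    using conc_all[OF Om OB, of t] unfolding conc_def by blast
  define \<kappa> where "\<kappa> = kappa \<mu> a0 a b y (Suc t)"
  have \<kappa>: "\<kappa> > 0" unfolding \<kappa>_def by (rule A0_kappa[OF t1])
  have \<kappa>eq: "\<kappa> = mfilt \<mu> a0 a b y t Ob" unfolding \<kappa>_def kappa_eq mfilt_def Ob_def by (simp add: mult.commute)
  have \<nu>eq: "mfilt \<mu> a0 a b y (Suc t) \<psi> = mfilt \<mu> a0 a b y t \<Phi> / \<kappa>"
  proof -
    have "mfilt \<mu> a0 a b y (Suc t) \<psi> = (\<integral>u. filt \<mu> a0 a b y t u * \<Phi> u \<partial>\<mu>) / \<kappa>"
      using mfilt_step[OF t1 psi(1) M'(2)] by (simp add: \<kappa>_def \<Phi>_def)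
    moreover have "(\<integral>u. filt \<mu> a0 a b y t u * \<Phi> u \<partial>\<mu>) = mfilt \<mu> a0 a b y t \<Phi>"
      unfolding mfilt_def by (simp add: mult.commute)
    ultimately show ?thesis by simp
  qed
  define K where "K = min c1 c2 * \<delta> * \<kappa>\<^sup>2 / (1 + M')"
  have K: "K > 0" unfolding K_def using C1 C2 delta \<kappa> M' by simp
  show ?thesis
  proof (intro exI conjI allI impI)
    show "C1 + C2 + 1 > 0" using C1 C2 by simp
    show "K > 0" by (rule K)
    fix N :: nat assume N: "N > 0"
    let ?P = "pf_law \<mu> a0 a b y N t"
    interpret P: prob_space ?P by (rule prob_law[OF N])
    define s where "s = sqrt (real N)"
    have s: "s > 0" unfolding s_def using N by simp
    have s2: "s\<^sup>2 = real N" unfolding s_def by simp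
    define \<eta> where "\<eta> = sqrt (\<delta> * \<kappa>\<^sup>2 * bN N / ((1 + M') * s))"
    have eta0: "\<eta> > 0" unfolding \<eta>_def using delta \<kappa> bN_pos[of N] M' s by simp
    have eta2: "\<eta>\<^sup>2 = \<delta> * \<kappa>\<^sup>2 * bN N / ((1 + M') * s)"
      unfolding \<eta>_def using delta \<kappa> bN_pos[of N] M' s by simp
    have eta: "\<eta>\<^sup>2 * (1 + M') * s = \<delta> * \<kappa>\<^sup>2 * bN N" unfolding eta2 using M' s by simp
    have Neta: "real N * \<eta>\<^sup>2 = (\<delta> * \<kappa>\<^sup>2 / (1 + M')) * (s * bN N)"
    proof -
      have h1: "1 + M' \<noteq> 0" using M' by simp
      have "s + M' * s > 0" using s M'(1) by (simp add: add_pos_pos)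
      hence h2: "s + M' * s \<noteq> 0" by simp
      have "real N * \<eta>\<^sup>2 = (s * s) * (\<delta> * \<kappa>\<^sup>2 * bN N) / ((1 + M') * s)"
        unfolding eta2 s2[symmetric] by (simp add: power2_eq_square)
      also have "\<dots> = s * (\<delta> * \<kappa>\<^sup>2 * bN N) / (1 + M')" using s h1 h2 by (simp add: field_simps)
      also have "\<dots> = (\<delta> * \<kappa>\<^sup>2 / (1 + M')) * (s * bN N)" by (simp add: field_simps)
      finally show ?thesis .
    qed
    define E where "E = {xs \<in> space ?P.
               \<bar> sqrt (real N) / bN N *
                   ((\<Sum>i<N. Lop \<mu> a b y (Suc t) \<psi> (xs i)) / (\<Sum>i<N. Lop \<mu> a b y (Suc t) (\<lambda>_. 1) (xs i))
                    - mfilt \<mu> a0 a b y (Suc t) \<psi>)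
                 - 1 / (bN N * sqrt (real N) * kappa \<mu> a0 a b y (Suc t)) *
                   ((\<Sum>i<N. Lop \<mu> a b y (Suc t) \<psi> (xs i))
                    - mfilt \<mu> a0 a b y (Suc t) \<psi> * (\<Sum>i<N. Lop \<mu> a b y (Suc t) (\<lambda>_. 1) (xs i))) \<bar> > \<delta>}"
    define B1 where "B1 = {xs \<in> space ?P. \<eta> \<le> \<bar>avg N \<Phi> xs - mfilt \<mu> a0 a b y t \<Phi>\<bar>}"
    define B2 where "B2 = {xs \<in> space ?P. \<eta> \<le> \<bar>avg N Ob xs - mfilt \<mu> a0 a b y t Ob\<bar>}"
    have B1m: "B1 \<in> sets ?P" unfolding B1_def \<Phi>_def by (rule set_meas_law[OF N avg_meas[OF psi(1)]])
    have B2m: "B2 \<in> sets ?P" unfolding B2_def Ob_def by (rule set_meas_law[OF N avg_meas]) simp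
    have sub: "E \<subseteq> B1 \<union> B2"
    proof
      fix xs assume xs: "xs \<in> E"
      show "xs \<in> B1 \<union> B2"
      proof (rule ccontr)
        assume "xs \<notin> B1 \<union> B2"
        hence n1: "\<bar>avg N \<Phi> xs - mfilt \<mu> a0 a b y t \<Phi>\<bar> < \<eta>"
          and n2: "\<bar>avg N Ob xs - \<kappa>\<bar> < \<eta>"
          using xs unfolding E_def B1_def B2_def \<kappa>eq by auto
        have qpos: "avg N Ob xs > 0" unfolding avg_def using N Opos by (intro divide_pos_pos sum_pos) auto
        have pq: "\<bar>avg N \<Phi> xs\<bar> \<le> M' * avg N Ob xs"
        proof -
          have "\<bar>\<Sum>i<N. \<Phi> (xs i)\<bar> \<le> (\<Sum>i<N. \<bar>\<Phi> (xs i)\<bar>)" by (rule sum_abs)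
          also have "\<dots> \<le> (\<Sum>i<N. M' * Ob (xs i))" by (intro sum_mono \<Phi>b)
          finally show ?thesis unfolding avg_def using N by (simp add: abs_divide sum_distrib_left divide_right_mono)
        qed
        have A: "\<bar>s / bN N * (avg N \<Phi> xs / avg N Ob xs - mfilt \<mu> a0 a b y t \<Phi> / \<kappa>)
             - 1 / (bN N * s * \<kappa>) * (s\<^sup>2 * avg N \<Phi> xs - mfilt \<mu> a0 a b y t \<Phi> / \<kappa> * (s\<^sup>2 * avg N Ob xs))\<bar> \<le> \<delta>"
          by (rule alg2[OF qpos \<kappa> M'(1) s bN_pos pq n1 n2 eta])
        have e1: "s\<^sup>2 * avg N \<Phi> xs = (\<Sum>i<N. \<Phi> (xs i))" unfolding s2 avg_def using N by simp
        have e2: "s\<^sup>2 * avg N Ob xs = (\<Sum>i<N. Ob (xs i))" unfolding s2 avg_def using N by simp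
        have e3: "avg N \<Phi> xs / avg N Ob xs = (\<Sum>i<N. \<Phi> (xs i)) / (\<Sum>i<N. Ob (xs i))"
          unfolding avg_def using N by simp
        from A have "\<not> \<delta> < \<bar>s / bN N * ((\<Sum>i<N. \<Phi> (xs i)) / (\<Sum>i<N. Ob (xs i)) - mfilt \<mu> a0 a b y t \<Phi> / \<kappa>)
             - 1 / (bN N * s * \<kappa>) * ((\<Sum>i<N. \<Phi> (xs i)) - mfilt \<mu> a0 a b y t \<Phi> / \<kappa> * (\<Sum>i<N. Ob (xs i)))\<bar>"
          unfolding e1 e2 e3 by simp
        thus False using xs unfolding E_def \<nu>eq[symmetric] \<kappa>_def[symmetric] s_def[symmetric] \<Phi>_def[symmetric] Ob_def[symmetric]
          by simp
      qed
    qed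
    have Em: "E \<subseteq> space ?P" unfolding E_def by auto
    have "measure ?P E \<le> measure ?P (B1 \<union> B2)" using B1m B2m sub by (intro P.finite_measure_mono) auto
    also have "\<dots> \<le> measure ?P B1 + measure ?P B2" using B1m B2m by (intro measure_Un_le) auto
    also have "\<dots> \<le> C1 * exp (- c1 * (real N * \<eta>\<^sup>2)) + C2 * exp (- c2 * (real N * \<eta>\<^sup>2))"
      unfolding B1_def B2_def using N eta0 by (intro add_mono b1 b2) auto
    also have "\<dots> \<le> C1 * exp (- K * (s * bN N)) + C2 * exp (- K * (s * bN N))"
    proof (intro add_mono mult_left_mono C1 C2)
      have x0: "s * bN N \<ge> 0" using s bN_pos[of N] by simp
      have dd: "\<delta> * \<kappa>\<^sup>2 / (1 + M') > 0" using delta \<kappa> M' by simp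
      have Keq: "K = min c1 c2 * (\<delta> * \<kappa>\<^sup>2 / (1 + M'))" unfolding K_def by simp
      have Kc1: "K \<le> c1 * (\<delta> * \<kappa>\<^sup>2 / (1 + M'))" unfolding Keq
        by (rule mult_right_mono[OF min.cobounded1 less_imp_le[OF dd]])
      have Kc2: "K \<le> c2 * (\<delta> * \<kappa>\<^sup>2 / (1 + M'))" unfolding Keq
        by (rule mult_right_mono[OF min.cobounded2 less_imp_le[OF dd]])
      have "exp (- c1 * (real N * \<eta>\<^sup>2)) = exp (- (c1 * (\<delta> * \<kappa>\<^sup>2 / (1 + M'))) * (s * bN N))"
        unfolding Neta by (simp add: mult_ac)
      also have "\<dots> \<le> exp (- K * (s * bN N))"
        by (rule exp_rate[OF Kc1 x0])
      finally show "exp (- c1 * (real N * \<eta>\<^sup>2)) \<le> exp (- K * (s * bN N))" .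
      have "exp (- c2 * (real N * \<eta>\<^sup>2)) = exp (- (c2 * (\<delta> * \<kappa>\<^sup>2 / (1 + M'))) * (s * bN N))"
        unfolding Neta by (simp add: mult_ac)
      also have "\<dots> \<le> exp (- K * (s * bN N))"
        by (rule exp_rate[OF Kc2 x0])
      finally show "exp (- c2 * (real N * \<eta>\<^sup>2)) \<le> exp (- K * (s * bN N))" .
    qed
    also have "\<dots> \<le> (C1 + C2 + 1) * exp (- K * (s * bN N))" by (simp add: algebra_simps)
    finally have fin: "measure ?P E \<le> (C1 + C2 + 1) * exp (- K * (s * bN N))" .
    show "measure ?P {xs \<in> space ?P.
               \<bar> sqrt (real N) / bN N *
                   ((\<Sum>i<N. Lop \<mu> a b y (Suc t) \<psi> (xs i)) / (\<Sum>i<N. Lop \<mu> a b y (Suc t) (\<lambda>_. 1) (xs i))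
                    - mfilt \<mu> a0 a b y (Suc t) \<psi>)
                 - 1 / (bN N * sqrt (real N) * kappa \<mu> a0 a b y (Suc t)) *
                   ((\<Sum>i<N. Lop \<mu> a b y (Suc t) \<psi> (xs i))
                    - mfilt \<mu> a0 a b y (Suc t) \<psi> * (\<Sum>i<N. Lop \<mu> a b y (Suc t) (\<lambda>_. 1) (xs i))) \<bar> > \<delta>}
          \<le> (C1 + C2 + 1) * exp (- K * (sqrt (real N) * bN N))"
      using fin unfolding E_def s_def .
  qed
qed

end




theorem lemma3p2:
  fixes \<mu> :: "'a::euclidean_space measure" and \<nu> :: "'b measure"
    and a0 :: "'a \<Rightarrow> real" and a :: "nat \<Rightarrow> 'a \<Rightarrow> 'a \<Rightarrow> real"
    and b :: "nat \<Rightarrow> 'a \<Rightarrow> 'b \<Rightarrow> real" and y :: "nat \<Rightarrow> 'b"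
    and T :: nat and \<psi> :: "'a \<Rightarrow> real" and bN :: "nat \<Rightarrow> real" and \<delta> :: real
  assumes mu_sets: "sets \<mu> = sets borel" and mu_sf: "sigma_finite_measure \<mu>"
    and y_mem: "\<And>t. y t \<in> space \<nu>"
    and a0_meas: "a0 \<in> borel_measurable \<mu>" and a0_nn: "\<And>x. a0 x \<ge> 0"
    and a0_dens: "(\<integral>\<^sup>+x. ennreal (a0 x) \<partial>\<mu>) = 1"
    and a_meas: "\<And>t. (\<lambda>(x, x'). a t x x') \<in> borel_measurable (\<mu> \<Otimes>\<^sub>M \<mu>)"
    and a_nn: "\<And>t x x'. a t x x' \<ge> 0"
    and a_dens: "\<And>t x. (\<integral>\<^sup>+x'. ennreal (a t x x') \<partial>\<mu>) = 1"
    and b_meas: "\<And>t. (\<lambda>(x, v). b t x v) \<in> borel_measurable (\<mu> \<Otimes>\<^sub>M \<nu>)"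
    and b_nn: "\<And>t x v. b t x v \<ge> 0"
    and b_dens: "\<And>t x. (\<integral>\<^sup>+v. ennreal (b t x v) \<partial>\<nu>) = 1"
    and A0_bdd: "\<And>t. t \<ge> 1 \<Longrightarrow> bdd_above (range (Lop \<mu> a b y t (\<lambda>_. 1)))"
    and A0_pos: "\<And>t x. t \<ge> 1 \<Longrightarrow> Lop \<mu> a b y t (\<lambda>_. 1) x > 0"
    and A0_kappa: "\<And>t. t \<ge> 1 \<Longrightarrow> kappa \<mu> a0 a b y t > 0"
    and T_ge: "T \<ge> 1"
    and psi_meas: "\<psi> \<in> borel_measurable borel" and psi_bdd: "bounded (range \<psi>)"
    and bN_pos: "\<And>N. bN N > 0"
    and bN_lim: "filterlim bN at_top sequentially"
    and bN_lim2: "filterlim (\<lambda>N. sqrt (real N) / bN N) at_top sequentially"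
    and delta_pos: "\<delta> > 0"
  shows "limsup (\<lambda>N. eln (measure (pf_law \<mu> a0 a b y N (T - 1))
            {xs \<in> space (pf_law \<mu> a0 a b y N (T - 1)).
               \<bar> sqrt (real N) / bN N *
                   ((\<Sum>i<N. Lop \<mu> a b y T \<psi> (xs i)) / (\<Sum>i<N. Lop \<mu> a b y T (\<lambda>_. 1) (xs i))
                    - mfilt \<mu> a0 a b y T \<psi>)
                 - 1 / (bN N * sqrt (real N) * kappa \<mu> a0 a b y T) *
                   ((\<Sum>i<N. Lop \<mu> a b y T \<psi> (xs i))
                    - mfilt \<mu> a0 a b y T \<psi> * (\<Sum>i<N. Lop \<mu> a b y T (\<lambda>_. 1) (xs i))) \<bar> > \<delta>})
          / ereal ((bN N)\<^sup>2)) = -\<infinity>"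
proof -
  interpret hmm \<mu> \<nu> a0 a b y
    by (rule hmm.intro[OF mu_sets mu_sf y_mem a0_meas a0_nn a0_dens a_meas a_nn b_meas b_nn A0_bdd A0_pos A0_kappa])
  obtain t where T: "T = Suc t" using T_ge by (cases T) auto
  have T1: "T - 1 = t" using T by simp
  obtain M where M: "\<And>x. \<bar>\<psi> x\<bar> \<le> M"
    using psi_bdd unfolding bounded_iff by auto
  have psi: "\<psi> \<in> borel_measurable \<mu>" using psi_meas meas_mu_iff by blast
  show ?thesis unfolding T1 unfolding T
    by (rule limsup_final'[OF bN_pos bN_lim bN_lim2 main_bound[OF psi M bN_pos delta_pos, of t]])
qed


end
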